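(* Let $(M,g)$ be a 2-dimensional asymptotically conic surface $M=M_0\cup M_\infty$, $M_\infty=[A,\infty)\times\partial M$ with metric $dr^2+f(r,\theta)^2d\theta^2$ ($f>0$ smooth) satisfying (C3), and assume $M$ has strictly negative Gaussian curvature on $M_0\cup([A,A+1]\times\partial M)$. Then there exist a function $a\in C^2([A,\infty))$ with $0\le a\le1$, $a'\le0$, $a\equiv1$ on $[A,A+\tfrac12]$, $a\equiv0$ on $(A+1,\infty)$, and a constant $c_1>0$ such that, setting $\tilde f(r,\theta)=(1-a(r))\sinh(c_1r)+a(r)f(r,\theta)$ and letting $\tilde M=M_0\cup([A,\infty)\times\partial M)$ carry the metric $\tilde g$ equal to $g$ on $M_0$ and to $dr^2+\tilde f(r,\theta)^2d\theta^2$ on $[A,\infty)\times\partial M$: (i) $\tilde M$ has strictly negative Gaussian curvature everywhere; (ii) along any geodesic of $\tilde M$ in the region where $a(r)\ne1$ (in particular $r>A+\tfrac12$) one has $\ddot r>0$; and (iii) if $\chi\in C^2_0(M)$ with $\chi\equiv1$ on $M_0$ and $\chi\equiv0$ on $\{r\ge A+\tfrac14\}$, then every geodesic of $\tilde M$ passing through $\operatorname{supp}\nabla\chi$ has $r\to\infty$ in at least one time direction (i.e. $\operatorname{supp}[\chi,\Delta_{\tilde g}]$ is nontrapping in $\tilde M$).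
   Context: (C3): there is $C>0$ with $-\partial_r(f(r,\theta)^{-2})\ge\frac Cr f(r,\theta)^{-2}$ on $M_\infty$. For a metric $dr^2+h(r,\theta)^2d\theta^2$ the Gaussian curvature is $-\partial_{rr}h/h$. The geodesic flow on $M_\infty$ is assumed not to return into the compact part once it exits with $\dot r>0$ (consequence of (C3)). *)

theory Defs
  imports "HOL-Analysis.Analysis"
begin

text \<open>Coordinates on the end: a point of the end [A,oo) x dM is (k, r, theta) where
  k ranges over a finite type indexing the circle components of dM, r >= A, and theta is a
  real (2 pi - periodic) angle coordinate. A warped metric dr^2 + h(r,theta)^2 dtheta^2 on
  component k is represented by h :: real => real => real.\<close>

definition endH :: "real \<Rightarrow> (real \<times> real) set" where
  "endH A = {p. A \<le> fst p}"

text \<open>C^k on a set S of the (r,theta)-plane, derivatives taken within S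
  (so on the closed half plane endH A this is the usual notion of C^k up to the boundary).\<close>
fun Ck :: "nat \<Rightarrow> (real \<times> real) set \<Rightarrow> (real \<times> real \<Rightarrow> real) \<Rightarrow> bool" where
  "Ck 0 S g = continuous_on S g"
| "Ck (Suc k) S g = (\<exists>G :: real \<times> real \<Rightarrow> real \<times> real.
      (\<forall>x\<in>S. (g has_derivative (\<lambda>v. G x \<bullet> v)) (at x within S))
      \<and> Ck k S (\<lambda>x. fst (G x)) \<and> Ck k S (\<lambda>x. snd (G x)))"

definition smooth_on2 :: "(real \<times> real) set \<Rightarrow> (real \<times> real \<Rightarrow> real) \<Rightarrow> bool" where
  "smooth_on2 S g = (\<forall>k. Ck k S g)"

definition C2_real :: "real set \<Rightarrow> (real \<Rightarrow> real) \<Rightarrow> bool" where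
  "C2_real S a = (\<exists>a1 a2. (\<forall>x\<in>S. (a has_real_derivative a1 x) (at x within S)
                              \<and> (a1 has_real_derivative a2 x) (at x within S))
                          \<and> continuous_on S a2)"

definition rderiv1 :: "real \<Rightarrow> (real \<Rightarrow> real) \<Rightarrow> real \<Rightarrow> real" where
  "rderiv1 A a r = (THE D. (a has_real_derivative D) (at r within {A..}))"

definition rderiv :: "real \<Rightarrow> (real \<Rightarrow> real \<Rightarrow> real) \<Rightarrow> real \<Rightarrow> real \<Rightarrow> real" where
  "rderiv A h r \<theta> = rderiv1 A (\<lambda>s. h s \<theta>) r"

definition thderiv :: "(real \<Rightarrow> real \<Rightarrow> real) \<Rightarrow> real \<Rightarrow> real \<Rightarrow> real" where
  "thderiv h r \<theta> = deriv (\<lambda>t. h r t) \<theta>"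

definition gauss_curv :: "real \<Rightarrow> (real \<Rightarrow> real \<Rightarrow> real) \<Rightarrow> real \<Rightarrow> real \<Rightarrow> real" where
  "gauss_curv A h r \<theta> = - rderiv A (rderiv A h) r \<theta> / h r \<theta>"

definition geodesic_on :: "real \<Rightarrow> (real \<Rightarrow> real \<Rightarrow> real) \<Rightarrow> real set \<Rightarrow>
    (real \<Rightarrow> real) \<Rightarrow> (real \<Rightarrow> real) \<Rightarrow> (real \<Rightarrow> real) \<Rightarrow> (real \<Rightarrow> real) \<Rightarrow> bool" where
  "geodesic_on A h I R \<Theta> R' \<Theta>' =
    (\<forall>t\<in>I. A \<le> R t
      \<and> (R has_real_derivative R' t) (at t within I)
      \<and> (\<Theta> has_real_derivative \<Theta>' t) (at t within I)
      \<and> (R' has_real_derivative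
            (h (R t) (\<Theta> t) * rderiv A h (R t) (\<Theta> t) * (\<Theta>' t)\<^sup>2)) (at t within I)
      \<and> (\<Theta>' has_real_derivative
            (- 2 * rderiv A h (R t) (\<Theta> t) / h (R t) (\<Theta> t) * R' t * \<Theta>' t
             - thderiv h (R t) (\<Theta> t) / h (R t) (\<Theta> t) * (\<Theta>' t)\<^sup>2)) (at t within I))"

end

theory Submission
  imports Defs "HOL-Analysis.Analysis"
begin


fun pit :: "('a::banach \<Rightarrow> 'a) \<Rightarrow> 'a \<Rightarrow> nat \<Rightarrow> real \<Rightarrow> 'a" where
  "pit F y0 0 t = y0"
| "pit F y0 (Suc n) t = y0 + integral {0..t} (\<lambda>s. F (pit F y0 n s))"

lemma within_Icc_to_Ici:
  fixes t T :: real assumes "0 \<le> t" "t < T"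
  shows "at t within {0..T} = at t within {0..}"
  by (rule at_within_nhd[of _ "{..<T}"]) (use assms in auto)

lemma picard_global:
  fixes F :: "'a::banach \<Rightarrow> 'a"
  assumes Kpos: "0 < K" and lip: "\<And>x y. norm (F x - F y) \<le> K * norm (x - y)"
  shows "\<exists>y. y 0 = y0 \<and> (\<forall>t\<ge>0. (y has_vector_derivative F (y t)) (at t within {0..}))"
proof -
  have Fc: "continuous_on S F" for S
    by (rule lipschitz_on_continuous_on[of K]) (auto simp: lipschitz_on_def dist_norm lip less_imp_le Kpos)
  have pc: "continuous_on {0..T} (pit F y0 n)" for n T
  proof (induction n)
    case 0 then show ?case by simp
  next
    case (Suc n)
    have "continuous_on {0..T} (\<lambda>s. F (pit F y0 n s))"
      using Suc by (intro continuous_on_compose2[OF Fc[of UNIV]]) auto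
    then have "(\<lambda>s. F (pit F y0 n s)) integrable_on {0..T}"
      by (rule integrable_continuous_real)
    then have "continuous_on {0..T} (\<lambda>x. integral {0..x} (\<lambda>s. F (pit F y0 n s)))"
      by (rule indefinite_integral_continuous_1)
    then show ?case by (simp add: continuous_on_add)
  qed
  have gc: "continuous_on {0..T} (\<lambda>s. F (pit F y0 n s))" for n T
    using pc by (intro continuous_on_compose2[OF Fc[of UNIV]]) auto
  have gi: "(\<lambda>s. F (pit F y0 n s)) integrable_on {0..T}" for n T
    using gc by (rule integrable_continuous_real)
  define N where "N = norm (F y0)"
  have powint: "integral {0..t} (\<lambda>s. c * s ^ m) = c * t ^ Suc m / Suc m" if "0 \<le> t" for t c :: real and m
  proof -
    have "((\<lambda>s. c * s ^ m) has_integral ((\<lambda>s. c * s ^ Suc m / Suc m) t - (\<lambda>s. c * s ^ Suc m / Suc m) 0)) {0..t}"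
      apply (rule fundamental_theorem_of_calculus[OF that])
      apply (rule has_real_derivative_iff_has_vector_derivative[THEN iffD1])
      apply (rule DERIV_subset[where s=UNIV])
       apply (rule derivative_eq_intros refl)+
       apply (simp add: field_simps)
      apply simp
      apply simp
      done
    then have "integral {0..t} (\<lambda>s. c * s ^ m) = c * t ^ Suc m / real (Suc m) - c * 0 ^ Suc m / real (Suc m)"
      by (rule integral_unique)
    then show ?thesis by simp
  qed
  have bnd: "norm (pit F y0 (Suc n) t - pit F y0 n t) \<le> N * K ^ n * t ^ Suc n / fact (Suc n)"
    if "0 \<le> t" for n t
    using that
  proof (induction n arbitrary: t)
    case 0
    then show ?case by (simp add: N_def)
  next
    case (Suc n)
    have "pit F y0 (Suc (Suc n)) t - pit F y0 (Suc n) t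
        = integral {0..t} (\<lambda>s. F (pit F y0 (Suc n) s) - F (pit F y0 n s))"
      using integral_diff[OF gi[of "Suc n" t] gi[of n t]] by simp
    also have "norm \<dots> \<le> integral {0..t} (\<lambda>s. (K * (N * K ^ n / fact (Suc n))) * s ^ Suc n)"
    proof (rule integral_norm_bound_integral)
      show "(\<lambda>s. F (pit F y0 (Suc n) s) - F (pit F y0 n s)) integrable_on {0..t}"
        by (intro integrable_diff gi)
      show "(\<lambda>s. (K * (N * K ^ n / fact (Suc n))) * s ^ Suc n) integrable_on {0..t}"
        by (intro integrable_continuous_real continuous_intros)
      fix s assume s: "s \<in> {0..t}"
      have "norm (F (pit F y0 (Suc n) s) - F (pit F y0 n s)) \<le> K * norm (pit F y0 (Suc n) s - pit F y0 n s)"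
        by (rule lip)
      also have "\<dots> \<le> K * (N * K ^ n * s ^ Suc n / fact (Suc n))"
        using Suc.IH[of s] s Kpos by (intro mult_left_mono) auto
      finally show "norm (F (pit F y0 (Suc n) s) - F (pit F y0 n s)) \<le> (K * (N * K ^ n / fact (Suc n))) * s ^ Suc n"
        by (simp add: field_simps)
    qed
    also have "\<dots> = N * K ^ Suc n * t ^ Suc (Suc n) / fact (Suc (Suc n))"
      using Suc.prems by (subst powint) (auto simp: field_simps)
    finally show ?case .
  qed
  define D where "D i t = pit F y0 (Suc i) t - pit F y0 i t" for i t
  define y where "y t = y0 + (\<Sum>i. D i t)" for t
  have ul: "uniform_limit {0..T} (pit F y0) y sequentially" if "0 \<le> T" for T
  proof -
    define M where "M n = N * K ^ n * T ^ Suc n / fact (Suc n)" for n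
    have "summable (\<lambda>n. inverse (fact n) * (K * T) ^ n)" by (rule summable_exp)
    then have "summable (\<lambda>n. inverse (fact (Suc n)) * (K * T) ^ (Suc n))"
      by (subst summable_Suc_iff)
    then have "summable (\<lambda>n. (N / K) * (inverse (fact (Suc n)) * (K * T) ^ (Suc n)))"
      by (rule summable_mult)
    moreover have "(N / K) * (inverse (fact (Suc n)) * (K * T) ^ (Suc n)) = M n" for n
      using Kpos by (simp add: M_def field_simps power_mult_distrib)
    ultimately have sM: "summable M" by simp
    have "uniform_limit {0..T} (\<lambda>n x. \<Sum>i<n. D i x) (\<lambda>x. suminf (\<lambda>i. D i x)) sequentially"
    proof (rule Weierstrass_m_test[OF _ sM])
      fix n x assume x: "x \<in> {0..T}"
      have "norm (D n x) \<le> N * K ^ n * x ^ Suc n / fact (Suc n)"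
        unfolding D_def using x by (intro bnd) auto
      also have "\<dots> \<le> M n" unfolding M_def using x Kpos
        by (intro divide_right_mono mult_left_mono power_mono) (auto simp: N_def)
      finally show "norm (D n x) \<le> M n" .
    qed
    moreover have "(\<Sum>i<n. D i x) = pit F y0 n x - y0" for n x
      unfolding D_def by (subst sum_lessThan_telescope) simp
    ultimately show ?thesis
      unfolding uniform_limit_iff y_def
      by (simp add: dist_norm algebra_simps)
  qed
  have yc: "continuous_on {0..T} y" if "0 \<le> T" for T
    by (rule uniform_limit_theorem[OF _ ul[OF that]]) (auto intro: pc always_eventually)
  have yeq: "y t = y0 + integral {0..t} (\<lambda>s. F (y s))" if "0 \<le> t" for t
  proof -
    have u1: "uniform_limit {0..t} (\<lambda>n s. F (pit F y0 n s)) (\<lambda>s. F (y s)) sequentially"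
      unfolding uniform_limit_iff
    proof (intro allI impI)
      fix e :: real assume e: "e > 0"
      then have "\<forall>\<^sub>F n in sequentially. \<forall>x\<in>{0..t}. dist (pit F y0 n x) (y x) < e / K"
        using ul[OF that] Kpos unfolding uniform_limit_iff by auto
      then show "\<forall>\<^sub>F n in sequentially. \<forall>x\<in>{0..t}. dist (F (pit F y0 n x)) (F (y x)) < e"
      proof (rule eventually_mono, intro ballI)
        fix n x assume h: "\<forall>x\<in>{0..t}. dist (pit F y0 n x) (y x) < e / K" and x: "x \<in> {0..t}"
        have "dist (F (pit F y0 n x)) (F (y x)) \<le> K * dist (pit F y0 n x) (y x)"
          using lip by (simp add: dist_norm)
        also have "\<dots> < K * (e / K)" using h x Kpos by (intro mult_strict_left_mono) auto
        finally show "dist (F (pit F y0 n x)) (F (y x)) < e" using Kpos by simp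
      qed
    qed
    obtain I J where I: "\<And>n. ((\<lambda>s. F (pit F y0 n s)) has_integral I n) {0..t}"
      and J: "((\<lambda>s. F (y s)) has_integral J) {0..t}" and IJ: "I \<longlonglongrightarrow> J"
      by (rule uniform_limit_integral[OF u1 gc]) auto
    have "(\<lambda>n. pit F y0 (Suc n) t) \<longlonglongrightarrow> y0 + J"
    proof -
      have "integral {0..t} (\<lambda>s. F (pit F y0 n s)) = I n" for n using I[of n] by (rule integral_unique)
      then show ?thesis using IJ by (simp add: tendsto_add)
    qed
    moreover have "(\<lambda>n. pit F y0 (Suc n) t) \<longlonglongrightarrow> y t"
      using tendsto_uniform_limitI[OF ul[OF that], of t] that
        filterlim_sequentially_Suc[of "\<lambda>n. pit F y0 n t" "nhds (y t)", symmetric]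
      by simp
    ultimately have "y t = y0 + J" using LIMSEQ_unique by blast
    then show ?thesis using J by (simp add: integral_unique)
  qed
  have "(y has_vector_derivative F (y t)) (at t within {0..})" if t: "0 \<le> t" for t
  proof -
    have c: "continuous_on {0..t+1} (\<lambda>s. F (y s))"
      using yc[of "t+1"] t by (intro continuous_on_compose2[OF Fc[of UNIV]]) auto
    have "((\<lambda>u. y0 + integral {0..u} (\<lambda>s. F (y s))) has_vector_derivative F (y t)) (at t within {0..t+1})"
      using integral_has_vector_derivative[OF c, of t] t
      by (auto intro!: derivative_eq_intros)
    then have "(y has_vector_derivative F (y t)) (at t within {0..t+1})"
      by (rule has_vector_derivative_transform_within[where d=1]) (use t yeq in auto)
    then show ?thesis using within_Icc_to_Ici[of t "t+1"] t by simp
  qed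
  moreover have "y 0 = y0" using yeq[of 0] by simp
  ultimately show ?thesis by blast
qed




definition clp :: "real \<Rightarrow> real" where "clp x = max 0 (min 1 x)"
definition sm0 :: "real \<Rightarrow> real" where "sm0 x = 10*x^3 - 15*x^4 + 6*x^5"
definition sm1 :: "real \<Rightarrow> real" where "sm1 x = 30*x^2 - 60*x^3 + 30*x^4"
definition sm2 :: "real \<Rightarrow> real" where "sm2 x = 60*x - 180*x^2 + 120*x^3"

lemma deriv_split:
  fixes f :: "real \<Rightarrow> real"
  assumes "(f has_field_derivative D) (at x within {..x})" "(f has_field_derivative D) (at x within {x..})"
  shows "(f has_field_derivative D) (at x)"
proof -
  have u: "{..x} \<union> {x..} = UNIV" by auto
  have "((\<lambda>y. (f y - f x) / (y - x)) \<longlongrightarrow> D) (at x within ({..x} \<union> {x..}))"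
    using assms unfolding has_field_derivative_iff at_within_union by (rule filterlim_sup)
  then show ?thesis unfolding u has_field_derivative_iff by simp
qed

lemma clamp_deriv:
  fixes p p' :: "real \<Rightarrow> real"
  assumes d: "\<And>x. (p has_field_derivative p' x) (at x)" and z0: "p' 0 = 0" and z1: "p' 1 = 0"
  shows "((\<lambda>x. p (clp x)) has_field_derivative p' (clp x)) (at x)"
proof -
  have c0: "((\<lambda>x. p (clp x)) has_field_derivative 0) (at x within S)" if h: "\<And>z. z \<in> S \<Longrightarrow> dist z x < 1 \<Longrightarrow> z \<le> 0" and xs: "x \<in> S" for S x
  proof (rule has_field_derivative_transform_within[where f="\<lambda>_. p 0" and d=1])
    show "x \<in> S" by (rule xs)
    fix w assume "w \<in> S" "dist w x < 1" then have "w \<le> 0" by (rule h)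
    then show "p 0 = p (clp w)" by (simp add: clp_def)
  qed auto
  have c1: "((\<lambda>x. p (clp x)) has_field_derivative 0) (at x within S)" if h: "\<And>z. z \<in> S \<Longrightarrow> dist z x < 1 \<Longrightarrow> 1 \<le> z" and xs: "x \<in> S" for S x
  proof (rule has_field_derivative_transform_within[where f="\<lambda>_. p 1" and d=1])
    show "x \<in> S" by (rule xs)
    fix w assume "w \<in> S" "dist w x < 1" then have "1 \<le> w" by (rule h)
    then show "p 1 = p (clp w)" by (simp add: clp_def)
  qed auto
  have cm: "((\<lambda>x. p (clp x)) has_field_derivative p' x) (at x within S)" if h: "\<And>z. z \<in> S \<Longrightarrow> dist z x < 1 \<Longrightarrow> 0 \<le> z \<and> z \<le> 1" and xs: "x \<in> S" for S x
  proof (rule has_field_derivative_transform_within[where f="p" and d=1])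
    show "x \<in> S" by (rule xs)
    show "(p has_field_derivative p' x) (at x within S)" using d[of x] by (rule has_field_derivative_at_within)
    fix w assume "w \<in> S" "dist w x < 1" then have "0 \<le> w \<and> w \<le> 1" by (rule h)
    then show "p w = p (clp w)" by (simp add: clp_def)
  qed auto
  consider "x < 0" | "x = 0" | "0 < x \<and> x < 1" | "x = 1" | "1 < x" by linarith
  then show ?thesis
  proof cases
    case 1
    have "((\<lambda>x. p (clp x)) has_field_derivative 0) (at x within {..<0})" using 1 by (intro c0) auto
    moreover have "at x within {..<0} = at x" by (rule at_within_open) (use 1 in auto)
    moreover have "clp x = 0" using 1 by (simp add: clp_def)
    ultimately show ?thesis using z0 by simp
  next
    case 2
    have a: "((\<lambda>x. p (clp x)) has_field_derivative 0) (at 0 within {..0})" by (intro c0) auto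
    have b: "((\<lambda>x. p (clp x)) has_field_derivative p' 0) (at 0 within {0..})" by (intro cm) (auto simp: dist_real_def)
    show ?thesis unfolding 2 using a b z0 by (intro deriv_split) (simp_all add: clp_def)
  next
    case 3
    have "((\<lambda>x. p (clp x)) has_field_derivative p' x) (at x within {0<..<1})" using 3 by (intro cm) auto
    moreover have "at x within {0<..<1} = at x" by (rule at_within_open) (use 3 in auto)
    moreover have "clp x = x" using 3 by (simp add: clp_def)
    ultimately show ?thesis by simp
  next
    case 4
    have a: "((\<lambda>x. p (clp x)) has_field_derivative 0) (at 1 within {1..})" by (intro c1) auto
    have b: "((\<lambda>x. p (clp x)) has_field_derivative p' 1) (at 1 within {..1})" by (intro cm) (auto simp: dist_real_def)
    show ?thesis unfolding 4 using a b z1 by (intro deriv_split) (simp_all add: clp_def)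
  next
    case 5
    have "((\<lambda>x. p (clp x)) has_field_derivative 0) (at x within {1<..})" using 5 by (intro c1) auto
    moreover have "at x within {1<..} = at x" by (rule at_within_open) (use 5 in auto)
    moreover have "clp x = 1" using 5 by (simp add: clp_def)
    ultimately show ?thesis using z1 by simp
  qed
qed

lemma sm_derivs:
  "(sm0 has_field_derivative sm1 x) (at x)" "(sm1 has_field_derivative sm2 x) (at x)"
  unfolding sm0_def sm1_def sm2_def
  by (rule derivative_eq_intros refl | simp)+

lemma sm2_fact: "sm2 x = 60 * x * (1 - x) * (1 - 2*x)" by (simp add: sm2_def algebra_simps power2_eq_square power3_eq_cube)
lemma sm1_fact: "sm1 x = 30 * x^2 * (1 - x)^2" by (simp add: sm1_def algebra_simps power2_eq_square power3_eq_cube power4_eq_xxxx)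

lemma sm_props:
  assumes "0 \<le> x" "x \<le> 1"
  shows "0 \<le> sm0 x" "sm0 x \<le> 1" "0 \<le> sm1 x" "sm2 x < 0 \<Longrightarrow> 1/2 \<le> sm0 x" "- sm2 x \<le> 15"
proof -
  have e1: "sm0 x = x^3 * (10 - 15*x + 6*x^2)" by (simp add: sm0_def algebra_simps power2_eq_square power3_eq_cube power4_eq_xxxx numeral_eq_Suc)
  have "10 - 15*x + 6*x^2 = 6*(x-5/4)^2 + 5/8" by (simp add: power2_eq_square algebra_simps)
  then have "10 - 15*x + 6*x^2 > 0" using zero_le_power2[of "x - 5/4"] by linarith
  then show "0 \<le> sm0 x" unfolding e1 using assms by simp
  have e2: "1 - sm0 x = (1-x)^3 * (1 + 3*x + 6*x^2)" by (simp add: sm0_def algebra_simps power2_eq_square power3_eq_cube power4_eq_xxxx numeral_eq_Suc)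
  have "0 \<le> (1-x)^3 * (1 + 3*x + 6*x^2)" using assms by (intro mult_nonneg_nonneg) auto
  then show "sm0 x \<le> 1" using e2 by linarith
  show "0 \<le> sm1 x" unfolding sm1_fact by simp
  show "sm2 x < 0 \<Longrightarrow> 1/2 \<le> sm0 x"
  proof -
    assume "sm2 x < 0"
    then have "60 * x * (1 - x) * (1 - 2*x) < 0" by (simp add: sm2_fact)
    moreover have "x \<le> 1/2 \<Longrightarrow> 0 \<le> 60 * x * (1 - x) * (1 - 2*x)" using assms by (intro mult_nonneg_nonneg) auto
    ultimately have "x > 1/2" by linarith
    define y where "y = x - 1/2"
    have y: "0 < y" "y \<le> 1/2" using \<open>x > 1/2\<close> assms by (auto simp: y_def)
    have "sm0 x = 1/2 + y * (15/8 - 5 * y^2 + 6 * y^4)"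
      by (simp add: sm0_def y_def field_simps eval_nat_numeral)
    moreover have "15/8 - 5 * y^2 + 6 * y^4 \<ge> 0"
    proof -
      have "y^2 \<le> (1/2)^2" using y by (intro power_mono) auto
      moreover have "y^4 = (y^2)^2" by simp
      ultimately show ?thesis using zero_le_power2[of "y^2"] by (simp add: power2_eq_square)
    qed
    ultimately show "1/2 \<le> sm0 x" using y by simp
  qed
  have "x * (1 - x) = 1/4 - (x - 1/2)^2" by (simp add: power2_eq_square algebra_simps)
  then have "x * (1 - x) \<le> 1/4" using zero_le_power2[of "x - 1/2"] by linarith
  moreover have "-(1 - 2*x) \<le> 1" "0 \<le> x * (1 - x)" using assms by auto
  ultimately have "x * (1 - x) * (-(1 - 2*x)) \<le> 1/4 * 1"
  proof (cases "0 \<le> -(1 - 2*x)")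
    case True
    then show ?thesis using \<open>x * (1 - x) \<le> 1/4\<close> \<open>-(1 - 2*x) \<le> 1\<close> by (intro mult_mono) auto
  next
    case False
    then have "x * (1 - x) * (-(1 - 2*x)) \<le> 0" using \<open>0 \<le> x * (1 - x)\<close> by (intro mult_nonneg_nonpos) auto
    then show ?thesis by simp
  qed
  then show "- sm2 x \<le> 15" unfolding sm2_fact by (simp add: algebra_simps)
qed

lemma sm_ends: "sm0 0 = 0" "sm0 1 = 1" "sm1 0 = 0" "sm1 1 = 0" "sm2 0 = 0" "sm2 1 = 0"
  by (simp_all add: sm0_def sm1_def sm2_def)

lemma clp_range: "0 \<le> clp x" "clp x \<le> 1" by (auto simp: clp_def)

definition acut :: "real \<Rightarrow> real \<Rightarrow> real" where "acut A r = 1 - sm0 (clp (2*(r - A) - 1))"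
definition acut1 :: "real \<Rightarrow> real \<Rightarrow> real" where "acut1 A r = - 2 * sm1 (clp (2*(r - A) - 1))"
definition acut2 :: "real \<Rightarrow> real \<Rightarrow> real" where "acut2 A r = - 4 * sm2 (clp (2*(r - A) - 1))"

lemma acut_derivs:
  "(acut A has_field_derivative acut1 A r) (at r)"
  "(acut1 A has_field_derivative acut2 A r) (at r)"
proof -
  have d0: "((\<lambda>x. sm0 (clp x)) has_field_derivative sm1 (clp x)) (at x)" for x
    by (rule clamp_deriv) (auto intro: sm_derivs simp: sm_ends)
  have d1: "((\<lambda>x. sm1 (clp x)) has_field_derivative sm2 (clp x)) (at x)" for x
    by (rule clamp_deriv) (auto intro: sm_derivs simp: sm_ends)
  show "(acut A has_field_derivative acut1 A r) (at r)"
    unfolding acut_def[abs_def] acut1_def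
    by (rule derivative_eq_intros DERIV_chain2[OF d0] refl | simp)+
  show "(acut1 A has_field_derivative acut2 A r) (at r)"
    unfolding acut1_def[abs_def] acut2_def
    by (rule derivative_eq_intros DERIV_chain2[OF d1] refl | simp)+
qed

lemma acut2_cont: "continuous_on S (acut2 A)"
  unfolding acut2_def[abs_def] sm2_def clp_def by (intro continuous_intros)

lemma acut_cont: "continuous_on S (acut A)" "continuous_on S (acut1 A)"
  unfolding acut_def[abs_def] acut1_def[abs_def] sm0_def sm1_def clp_def by (intro continuous_intros)+

lemma acut_props:
  shows "0 \<le> acut A r" "acut A r \<le> 1" "acut1 A r \<le> 0"
    "r \<le> A + 1/2 \<Longrightarrow> acut A r = 1 \<and> acut1 A r = 0 \<and> acut2 A r = 0"
    "A + 1 \<le> r \<Longrightarrow> acut A r = 0 \<and> acut1 A r = 0 \<and> acut2 A r = 0"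
    "0 < acut2 A r \<Longrightarrow> acut A r \<le> 1/2 \<and> acut2 A r \<le> 60"
    "acut1 A r \<noteq> 0 \<Longrightarrow> A + 1/2 < r \<and> r < A + 1"
    "acut2 A r \<noteq> 0 \<Longrightarrow> A + 1/2 < r \<and> r < A + 1"
proof -
  define x where "x = clp (2*(r - A) - 1)"
  have x: "0 \<le> x" "x \<le> 1" unfolding x_def by (rule clp_range)+
  note P = sm_props[OF x]
  show "0 \<le> acut A r" "acut A r \<le> 1" "acut1 A r \<le> 0"
    using P unfolding acut_def acut1_def x_def[symmetric] by auto
  show "r \<le> A + 1/2 \<Longrightarrow> acut A r = 1 \<and> acut1 A r = 0 \<and> acut2 A r = 0"
    unfolding acut_def acut1_def acut2_def by (simp add: clp_def sm_ends)
  show "A + 1 \<le> r \<Longrightarrow> acut A r = 0 \<and> acut1 A r = 0 \<and> acut2 A r = 0"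
    unfolding acut_def acut1_def acut2_def by (simp add: clp_def sm_ends)
  show "0 < acut2 A r \<Longrightarrow> acut A r \<le> 1/2 \<and> acut2 A r \<le> 60"
    using P unfolding acut_def acut2_def x_def[symmetric] by auto
  show "acut1 A r \<noteq> 0 \<Longrightarrow> A + 1/2 < r \<and> r < A + 1"
    unfolding acut1_def
    by (cases "r \<le> A + 1/2"; cases "A + 1 \<le> r") (auto simp: clp_def sm_ends)
  show "acut2 A r \<noteq> 0 \<Longrightarrow> A + 1/2 < r \<and> r < A + 1"
    unfolding acut2_def
    by (cases "r \<le> A + 1/2"; cases "A + 1 \<le> r") (auto simp: clp_def sm_ends)
qed




lemma partial_r:
  assumes d: "(F has_derivative (\<lambda>v. Fr (r,\<theta>) * fst v + Ft (r,\<theta>) * snd v)) (at (r,\<theta>) within endH A)"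
    and r: "A \<le> r"
  shows "((\<lambda>s. F (s,\<theta>)) has_real_derivative Fr (r,\<theta>)) (at r within {A..})"
proof -
  have p: "((\<lambda>s. (s,\<theta>)) has_derivative (\<lambda>v. (v, 0))) (at r within {A..})"
    by (auto intro!: derivative_eq_intros)
  have "(F has_derivative (\<lambda>v. Fr (r,\<theta>) * fst v + Ft (r,\<theta>) * snd v)) (at (r,\<theta>) within (\<lambda>s. (s,\<theta>)) ` {A..})"
    by (rule has_derivative_subset[OF d]) (auto simp: endH_def)
  from has_derivative_in_compose[OF p this]
  have "((\<lambda>s. F (s,\<theta>)) has_derivative (*) (Fr (r,\<theta>))) (at r within {A..})" by simp
  then show ?thesis unfolding has_field_derivative_def by simp
qed

lemma partial_t:
  assumes d: "(F has_derivative (\<lambda>v. Fr (r,\<theta>) * fst v + Ft (r,\<theta>) * snd v)) (at (r,\<theta>) within endH A)"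
    and r: "A \<le> r"
  shows "((\<lambda>t. F (r,t)) has_real_derivative Ft (r,\<theta>)) (at \<theta>)"
proof -
  have p: "((\<lambda>t. (r,t)) has_derivative (\<lambda>v. (0, v))) (at \<theta>)"
    by (auto intro!: derivative_eq_intros)
  have "(F has_derivative (\<lambda>v. Fr (r,\<theta>) * fst v + Ft (r,\<theta>) * snd v)) (at (r,\<theta>) within (\<lambda>t. (r,t)) ` UNIV)"
    by (rule has_derivative_subset[OF d]) (use r in \<open>auto simp: endH_def\<close>)
  from has_derivative_in_compose[OF p this]
  have "((\<lambda>t. F (r,t)) has_derivative (*) (Ft (r,\<theta>))) (at \<theta>)" by simp
  then show ?thesis unfolding has_field_derivative_def by simp
qed

lemma inner_grad: "(G x \<bullet> v) = fst (G x) * fst v + snd (G x) * snd (v::real\<times>real)"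
  by (cases "G x", cases v) simp

lemma hasder_cont:
  assumes "\<forall>x\<in>S. (F has_derivative F' x) (at x within S)"
  shows "continuous_on S F"
  using assms has_derivative_continuous continuous_on_eq_continuous_within by blast

lemma smooth_partials:
  assumes "Ck 2 (endH A) F"
  obtains Fr Ft Frr Frt where
    "continuous_on (endH A) F" "continuous_on (endH A) Fr" "continuous_on (endH A) Ft"
    "continuous_on (endH A) Frr" "continuous_on (endH A) Frt"
    "\<forall>x\<in>endH A. (F has_derivative (\<lambda>v. Fr x * fst v + Ft x * snd v)) (at x within endH A)"
    "\<And>r \<theta>. A \<le> r \<Longrightarrow> ((\<lambda>s. F (s,\<theta>)) has_real_derivative Fr (r,\<theta>)) (at r within {A..})"
    "\<And>r \<theta>. A \<le> r \<Longrightarrow> ((\<lambda>t. F (r,t)) has_real_derivative Ft (r,\<theta>)) (at \<theta>)"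
    "\<And>r \<theta>. A \<le> r \<Longrightarrow> ((\<lambda>s. Fr (s,\<theta>)) has_real_derivative Frr (r,\<theta>)) (at r within {A..})"
    "\<And>r \<theta>. A \<le> r \<Longrightarrow> ((\<lambda>t. Fr (r,t)) has_real_derivative Frt (r,\<theta>)) (at \<theta>)"
proof -
  from assms obtain G where G: "\<forall>x\<in>endH A. (F has_derivative (\<lambda>v. G x \<bullet> v)) (at x within endH A)"
    and G1: "Ck 1 (endH A) (\<lambda>x. fst (G x))" and G2: "Ck 1 (endH A) (\<lambda>x. snd (G x))"
    by (auto simp: numeral_2_eq_2)
  from G1 obtain H where H: "\<forall>x\<in>endH A. ((\<lambda>x. fst (G x)) has_derivative (\<lambda>v. H x \<bullet> v)) (at x within endH A)"
    and H1: "continuous_on (endH A) (\<lambda>x. fst (H x))" and H2: "continuous_on (endH A) (\<lambda>x. snd (H x))"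
    by auto
  from G2 obtain K where K: "\<forall>x\<in>endH A. ((\<lambda>x. snd (G x)) has_derivative (\<lambda>v. K x \<bullet> v)) (at x within endH A)"
    by auto
  define Fr where "Fr x = fst (G x)" for x
  define Ft where "Ft x = snd (G x)" for x
  define Frr where "Frr x = fst (H x)" for x
  define Frt where "Frt x = snd (H x)" for x
  have dF: "\<forall>x\<in>endH A. (F has_derivative (\<lambda>v. Fr x * fst v + Ft x * snd v)) (at x within endH A)"
    using G unfolding Fr_def Ft_def inner_grad[of G] by simp
  have dFr: "\<forall>x\<in>endH A. (Fr has_derivative (\<lambda>v. Frr x * fst v + Frt x * snd v)) (at x within endH A)"
    using H unfolding Fr_def Frr_def Frt_def inner_grad[of H] by simp
  have dFt: "\<forall>x\<in>endH A. (Ft has_derivative (\<lambda>v. K x \<bullet> v)) (at x within endH A)"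
    using K unfolding Ft_def by simp
  show ?thesis
  proof
    show "continuous_on (endH A) F" by (rule hasder_cont[OF dF])
    show "continuous_on (endH A) Fr" by (rule hasder_cont[OF dFr])
    show "continuous_on (endH A) Ft" by (rule hasder_cont[OF dFt])
    show "continuous_on (endH A) Frr" using H1 unfolding Frr_def by simp
    show "continuous_on (endH A) Frt" using H2 unfolding Frt_def by simp
    show "\<forall>x\<in>endH A. (F has_derivative (\<lambda>v. Fr x * fst v + Ft x * snd v)) (at x within endH A)" by (rule dF)
    fix r \<theta> assume r: "A \<le> r"
    then have m: "(r,\<theta>) \<in> endH A" by (simp add: endH_def)
    show "((\<lambda>s. F (s,\<theta>)) has_real_derivative Fr (r,\<theta>)) (at r within {A..})"
      using dF m r by (intro partial_r) auto
    show "((\<lambda>t. F (r,t)) has_real_derivative Ft (r,\<theta>)) (at \<theta>)"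
      using dF m r by (intro partial_t) auto
    show "((\<lambda>s. Fr (s,\<theta>)) has_real_derivative Frr (r,\<theta>)) (at r within {A..})"
      using dFr m r by (intro partial_r) auto
    show "((\<lambda>t. Fr (r,t)) has_real_derivative Frt (r,\<theta>)) (at \<theta>)"
      using dFr m r by (intro partial_t) auto
  qed
qed

lemma per_int:
  fixes P :: "real \<Rightarrow> 'a" and c t :: real
  assumes "\<And>t. P (t + c) = P t"
  shows "P (t + real_of_int n * c) = P t"
proof -
  have natc: "P (t + real m * c) = P t" for m :: nat and t :: real
  proof (induction m arbitrary: t)
    case 0 then show ?case by simp
  next
    case (Suc m)
    have "P (t + real (Suc m) * c) = P ((t + real m * c) + c)" by (simp add: algebra_simps)
    also have "\<dots> = P (t + real m * c)" by (rule assms)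
    finally show ?case using Suc by simp
  qed
  show ?thesis
  proof (cases "n \<ge> 0")
    case True then show ?thesis using natc[where m="nat n" and t=t] by simp
  next
    case False
    have "P (t + real_of_int n * c) = P ((t + real_of_int n * c) + real (nat (-n)) * c)"
      by (rule natc[symmetric])
    also have "\<dots> = P t" using False by simp
    finally show ?thesis .
  qed
qed

lemma bounded_periodic:
  fixes \<Phi> :: "real \<times> real \<Rightarrow> real"
  assumes c: "continuous_on (endH A) \<Phi>" and p: "\<And>r \<theta>. A \<le> r \<Longrightarrow> \<Phi> (r, \<theta> + 2*pi) = \<Phi> (r,\<theta>)"
  shows "\<exists>K. \<forall>r \<theta>. A \<le> r \<longrightarrow> r \<le> B \<longrightarrow> \<bar>\<Phi> (r,\<theta>)\<bar> \<le> K"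
proof -
  have "compact ({A..B} \<times> {0..2*pi})" by (intro compact_Times compact_Icc)
  moreover have "continuous_on ({A..B} \<times> {0..2*pi}) \<Phi>"
    by (rule continuous_on_subset[OF c]) (auto simp: endH_def)
  ultimately have "compact (\<Phi> ` ({A..B} \<times> {0..2*pi}))" using compact_continuous_image by blast
  then have "bounded (\<Phi> ` ({A..B} \<times> {0..2*pi}))" by (rule compact_imp_bounded)
  then obtain K where K0: "\<forall>y\<in>\<Phi> ` ({A..B} \<times> {0..2*pi}). norm y \<le> K" unfolding bounded_iff by blast
  have K: "\<bar>\<Phi> x\<bar> \<le> K" if "x \<in> {A..B} \<times> {0..2*pi}" for x using K0 that by auto
  show ?thesis
  proof (intro exI allI impI)
    fix r \<theta> assume r: "A \<le> r" "r \<le> B"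
    define n where "n = \<lfloor>\<theta> / (2*pi)\<rfloor>"
    define t where "t = \<theta> - real_of_int n * (2*pi)"
    have "real_of_int n \<le> \<theta> / (2*pi)" "\<theta> / (2*pi) < real_of_int n + 1" unfolding n_def by linarith+
    then have "real_of_int n * (2*pi) \<le> \<theta>" "\<theta> < (real_of_int n + 1) * (2*pi)"
      using pi_gt_zero by (simp_all add: field_simps)
    then have t: "0 \<le> t" "t \<le> 2*pi" unfolding t_def by (simp_all add: algebra_simps)
    have "\<Phi> (r, t + real_of_int n * (2*pi)) = \<Phi> (r, t)"
      by (rule per_int[where P="\<lambda>t. \<Phi> (r,t)"]) (use p r in auto)
    then have "\<Phi> (r,\<theta>) = \<Phi> (r,t)" by (simp add: t_def)
    then show "\<bar>\<Phi> (r,\<theta>)\<bar> \<le> K" using K[of "(r,t)"] r t by auto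
  qed
qed

lemma lip2:
  fixes U :: "real \<times> real \<Rightarrow> real"
  assumes dr: "\<And>r \<theta>. A \<le> r \<Longrightarrow> ((\<lambda>s. U (s,\<theta>)) has_real_derivative Ur (r,\<theta>)) (at r within {A..})"
    and dt: "\<And>r \<theta>. A \<le> r \<Longrightarrow> ((\<lambda>t. U (r,t)) has_real_derivative Ut (r,\<theta>)) (at \<theta>)"
    and br: "\<And>r \<theta>. A \<le> r \<Longrightarrow> \<bar>Ur (r,\<theta>)\<bar> \<le> L"
    and bt: "\<And>r \<theta>. A \<le> r \<Longrightarrow> \<bar>Ut (r,\<theta>)\<bar> \<le> L"
    and r1: "A \<le> r1" and r2: "A \<le> r2"
  shows "\<bar>U (r1,t1) - U (r2,t2)\<bar> \<le> L * (\<bar>r1 - r2\<bar> + \<bar>t1 - t2\<bar>)"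
proof -
  have "norm (U (r1,t1) - U (r2,t1)) \<le> L * norm (r1 - r2)"
    by (rule field_differentiable_bound[where S="{A..}" and f="\<lambda>s. U (s,t1)" and f'="\<lambda>s. Ur (s,t1)"])
      (use dr br r1 r2 in auto)
  moreover have "norm (U (r2,t1) - U (r2,t2)) \<le> L * norm (t1 - t2)"
    by (rule field_differentiable_bound[where S="UNIV" and f="\<lambda>t. U (r2,t)" and f'="\<lambda>t. Ut (r2,t)"])
      (use dt bt r2 in auto)
  ultimately show ?thesis by (simp add: algebra_simps)
qed

lemma deriv_unique_Ici:
  assumes "(f has_real_derivative D1) (at r within {A..})" "(g has_real_derivative D2) (at r within {A..})"
    and "\<And>s. A \<le> s \<Longrightarrow> f s = g s" and "A \<le> r"
  shows "D1 = D2"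
proof -
  have "(g has_real_derivative D1) (at r within {A..})"
    by (rule has_field_derivative_transform_within[OF assms(1), where d=1]) (use assms in auto)
  moreover have "at r within {A..} \<noteq> bot"
  proof
    assume b: "at r within {A..} = bot"
    have "at r within {r<..} \<le> at r within {A..}" by (rule at_le) (use assms(4) in auto)
    then have "at_right r = (bot :: real filter)" using b by (simp add: bot_unique)
    then show False by simp
  qed
  ultimately show ?thesis using assms(2) has_field_derivative_unique by blast
qed

lemma deriv_unique_shift:
  assumes "(f has_real_derivative D1) (at (x + c))" "(f has_real_derivative D2) (at x)"
    and "\<And>t. f (t + c) = f t"
  shows "D1 = D2"
proof -
  have "((\<lambda>t. f (t + c)) has_real_derivative D1) (at x)"
  proof -
    have "((\<lambda>t. t + c) has_real_derivative 1) (at x)" by (auto intro!: derivative_eq_intros)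
    from DERIV_chain2[of f D1 "\<lambda>t. t + c", OF assms(1) this] show ?thesis by simp
  qed
  then have "(f has_real_derivative D1) (at x)" using assms(3) by simp
  then show ?thesis using assms(2) DERIV_unique by blast
qed




lemma fst_comp:
  assumes "(\<phi> has_real_derivative D) (at (fst x))"
  shows "((\<lambda>y. \<phi> (fst y)) has_derivative (\<lambda>v. D * fst v)) (at x within S)"
proof -
  have "(\<phi> has_derivative (*) D) (at (fst x))" using assms by (simp add: has_field_derivative_def)
  from has_derivative_compose[OF has_derivative_fst[OF has_derivative_ident] this]
  show ?thesis by simp
qed

lemma sin_lip: "\<bar>sin a - sin b\<bar> \<le> \<bar>a - b\<bar>" for a b :: real
proof -
  have "norm (sin a - sin b) \<le> 1 * norm (a - b)"
    by (rule field_differentiable_bound[where S=UNIV and f=sin and f'=cos])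
       (auto intro!: derivative_eq_intros simp: abs_cos_le_one)
  then show ?thesis by simp
qed

lemma cos_lip: "\<bar>cos a - cos b\<bar> \<le> \<bar>a - b\<bar>" for a b :: real
proof -
  have "norm (cos a - cos b) \<le> 1 * norm (a - b)"
    by (rule field_differentiable_bound[where S=UNIV and f=cos and f'="\<lambda>x. - sin x"])
       (auto intro!: derivative_eq_intros simp: abs_sin_le_one)
  then show ?thesis by simp
qed

lemma prod_lip:
  fixes p1 p2 q1 q2 :: real
  assumes "\<bar>q1 - q2\<bar> \<le> L" "\<bar>q2\<bar> \<le> K"
  shows "\<bar>sin p1 * q1 - sin p2 * q2\<bar> \<le> L + K * \<bar>p1 - p2\<bar>"
proof -
  have "sin p1 * q1 - sin p2 * q2 = sin p1 * (q1 - q2) + (sin p1 - sin p2) * q2" by (simp add: algebra_simps)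
  also have "\<bar>\<dots>\<bar> \<le> \<bar>sin p1 * (q1 - q2)\<bar> + \<bar>(sin p1 - sin p2) * q2\<bar>" by (rule abs_triangle_ineq)
  also have "\<bar>sin p1 * (q1 - q2)\<bar> \<le> 1 * L"
    unfolding abs_mult by (intro mult_mono) (use assms abs_sin_le_one in auto)
  also have "\<bar>(sin p1 - sin p2) * q2\<bar> \<le> \<bar>p1 - p2\<bar> * K"
    unfolding abs_mult by (intro mult_mono sin_lip) (use assms in auto)
  finally show ?thesis by (simp add: algebra_simps)
qed

lemma norm_triple: "norm ((a, b, c) :: real \<times> real \<times> real) \<le> \<bar>a\<bar> + \<bar>b\<bar> + \<bar>c\<bar>"
proof -
  have "norm (a, b, c) \<le> norm a + norm (b, c)" by (rule norm_Pair_le)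
  also have "norm (b, c) \<le> norm b + norm c" by (rule norm_Pair_le)
  finally show ?thesis by simp
qed

lemma comp_norms: fixes x y :: "real \<times> real \<times> real"
  shows "\<bar>fst x - fst y\<bar> \<le> norm (x - y)" "\<bar>fst (snd x) - fst (snd y)\<bar> \<le> norm (x - y)"
    "\<bar>snd (snd x) - snd (snd y)\<bar> \<le> norm (x - y)"
proof -
  obtain a b c where x: "x = (a,b,c)" by (cases x) auto
  obtain a' b' c' where y: "y = (a',b',c')" by (cases y) auto
  have 1: "norm (a - a') \<le> norm (a - a', b - b', c - c')" by (rule norm_fst_le)
  have 2: "norm (b - b', c - c') \<le> norm (a - a', b - b', c - c')" by (rule norm_snd_le)
  have 3: "norm (b - b') \<le> norm (b - b', c - c')" by (rule norm_fst_le)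
  have 4: "norm (c - c') \<le> norm (b - b', c - c')" by (rule norm_snd_le)
  show "\<bar>fst x - fst y\<bar> \<le> norm (x - y)" "\<bar>fst (snd x) - fst (snd y)\<bar> \<le> norm (x - y)"
    "\<bar>snd (snd x) - snd (snd y)\<bar> \<le> norm (x - y)"
    using 1 2 3 4 by (auto simp: x y)
qed

lemma hvd_fst: "(f has_vector_derivative D) F \<Longrightarrow> ((\<lambda>x. fst (f x)) has_vector_derivative fst D) F"
  unfolding has_vector_derivative_def by (drule has_derivative_fst) simp
lemma hvd_snd: "(f has_vector_derivative D) F \<Longrightarrow> ((\<lambda>x. snd (f x)) has_vector_derivative snd D) F"
  unfolding has_vector_derivative_def by (drule has_derivative_snd) simp

lemma Ici_at: "0 < x \<Longrightarrow> at x within {0..} = at (x::real)"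
  by (rule at_within_interior) simp

lemma cont_Ici: assumes "\<And>t. 0 \<le> t \<Longrightarrow> (f has_real_derivative f' t) (at t within {0..})"
  shows "continuous_on {0..} f"
  using assms unfolding continuous_on_eq_continuous_within
  by (auto intro: DERIV_continuous)

lemma mono_Ici:
  assumes d: "\<And>t. 0 \<le> t \<Longrightarrow> (f has_real_derivative f' t) (at t within {0..})"
    and nn: "\<And>t. a < t \<Longrightarrow> t < b \<Longrightarrow> 0 \<le> f' t" and ab: "0 \<le> a" "a \<le> b"
  shows "f a \<le> f b"
proof (rule DERIV_nonneg_imp_increasing_open[OF ab(2)])
  fix x assume "a < x" "x < b"
  then have x: "0 < x" using ab by simp
  show "\<exists>y. (f has_real_derivative y) (at x) \<and> 0 \<le> y"
    using d[of x] nn[of x] x Ici_at[OF x] \<open>a < x\<close> \<open>x < b\<close> by auto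
next
  show "continuous_on {a..b} f"
    by (rule continuous_on_subset[OF cont_Ici[OF d]]) (use ab in auto)
qed

lemma rderiv1_eq:
  assumes "(g has_real_derivative D) (at r within {A..})" "\<And>s. A \<le> s \<Longrightarrow> f s = g s" "A \<le> r"
  shows "rderiv1 A f r = D"
proof -
  have f: "(f has_real_derivative D) (at r within {A..})"
    by (rule has_field_derivative_transform_within[OF assms(1), where d=1]) (use assms in auto)
  show ?thesis unfolding rderiv1_def
  proof (rule the_equality)
    show "(f has_real_derivative D) (at r within {A..})" by (rule f)
    fix D' assume "(f has_real_derivative D') (at r within {A..})"
    then show "D' = D" using deriv_unique_Ici[OF _ f, of f] assms(3) by blast
  qed
qed

lemma lin_escape:
  fixes R :: "real \<Rightarrow> real"
  assumes "0 < d" "\<And>t. Tz \<le> t \<Longrightarrow> c + d * t \<le> R t"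
  shows "filterlim R at_top at_top"
proof (subst filterlim_at_top, intro allI)
  fix Z :: real
  show "eventually (\<lambda>t. Z \<le> R t) at_top"
    unfolding eventually_at_top_linorder
  proof (intro exI allI impI)
    fix t assume t: "max Tz ((Z - c) / d) \<le> t"
    then have "(Z - c) / d \<le> t" by simp
    then have "Z - c \<le> d * t" using assms(1) by (simp add: field_simps)
    then show "Z \<le> R t" using assms(2)[of t] t by simp
  qed
qed

locale geo =
  fixes A c1 :: real and F Fr Ft Frr Frt :: "real \<times> real \<Rightarrow> real"
  assumes A_pos: "0 < A" and c1_ge: "11 \<le> c1"
  and contF: "continuous_on (endH A) F" and contFr: "continuous_on (endH A) Fr"
  and contFt: "continuous_on (endH A) Ft" and contFrr: "continuous_on (endH A) Frr"
  and contFrt: "continuous_on (endH A) Frt"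
  and dF: "\<forall>x\<in>endH A. (F has_derivative (\<lambda>v. Fr x * fst v + Ft x * snd v)) (at x within endH A)"
  and dF_r: "\<And>r \<theta>. A \<le> r \<Longrightarrow> ((\<lambda>s. F (s,\<theta>)) has_real_derivative Fr (r,\<theta>)) (at r within {A..})"
  and dF_t: "\<And>r \<theta>. A \<le> r \<Longrightarrow> ((\<lambda>t. F (r,t)) has_real_derivative Ft (r,\<theta>)) (at \<theta>)"
  and dFr_r: "\<And>r \<theta>. A \<le> r \<Longrightarrow> ((\<lambda>s. Fr (s,\<theta>)) has_real_derivative Frr (r,\<theta>)) (at r within {A..})"
  and dFr_t: "\<And>r \<theta>. A \<le> r \<Longrightarrow> ((\<lambda>t. Fr (r,t)) has_real_derivative Frt (r,\<theta>)) (at \<theta>)"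
  and Fpos: "\<And>r \<theta>. A \<le> r \<Longrightarrow> 0 < F (r,\<theta>)"
  and Fper: "\<And>r \<theta>. F (r, \<theta> + 2*pi) = F (r,\<theta>)"
  and Frpos: "\<And>r \<theta>. A \<le> r \<Longrightarrow> 0 < Fr (r,\<theta>)"
  and Frrpos: "\<And>r \<theta>. A \<le> r \<Longrightarrow> r \<le> A + 1 \<Longrightarrow> 0 < Frr (r,\<theta>)"
  and Fbnd: "\<And>r \<theta>. A + 1/2 \<le> r \<Longrightarrow> r \<le> A + 1 \<Longrightarrow> F (r,\<theta>) \<le> sinh (c1*r) \<and> Fr (r,\<theta>) \<le> c1 * cosh (c1*r)"
begin

definition hh :: "real \<times> real \<Rightarrow> real" where
  "hh x = (1 - acut A (fst x)) * sinh (c1 * fst x) + acut A (fst x) * F x"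
definition hr :: "real \<times> real \<Rightarrow> real" where
  "hr x = - acut1 A (fst x) * sinh (c1 * fst x) + (1 - acut A (fst x)) * (c1 * cosh (c1 * fst x))
          + acut1 A (fst x) * F x + acut A (fst x) * Fr x"
definition hrr :: "real \<times> real \<Rightarrow> real" where
  "hrr x = - acut2 A (fst x) * sinh (c1 * fst x) - 2 * acut1 A (fst x) * (c1 * cosh (c1 * fst x))
          + (1 - acut A (fst x)) * (c1^2 * sinh (c1 * fst x))
          + acut2 A (fst x) * F x + 2 * acut1 A (fst x) * Fr x + acut A (fst x) * Frr x"
definition ht :: "real \<times> real \<Rightarrow> real" where
  "ht x = acut A (fst x) * Ft x"
definition hrt :: "real \<times> real \<Rightarrow> real" where
  "hrt x = acut1 A (fst x) * Ft x + acut A (fst x) * Frt x"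

lemma c1_pos: "0 < c1" using c1_ge by simp

lemma acut_w: "(acut A has_real_derivative acut1 A r) (at r within S)"
  by (rule has_field_derivative_at_within[OF acut_derivs(1)])
lemma acut1_w: "(acut1 A has_real_derivative acut2 A r) (at r within S)"
  by (rule has_field_derivative_at_within[OF acut_derivs(2)])

lemma hh_r: assumes "A \<le> r"
  shows "((\<lambda>s. hh (s,\<theta>)) has_real_derivative hr (r,\<theta>)) (at r within {A..})"
  unfolding hh_def hr_def fst_conv
  by (rule derivative_eq_intros acut_w dF_r[OF assms] refl | simp add: algebra_simps)+

lemma hr_r: assumes "A \<le> r"
  shows "((\<lambda>s. hr (s,\<theta>)) has_real_derivative hrr (r,\<theta>)) (at r within {A..})"
  unfolding hr_def hrr_def fst_conv
  by (rule derivative_eq_intros acut_w acut1_w dF_r[OF assms] dFr_r[OF assms] refl | simp add: algebra_simps power2_eq_square)+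

lemma hh_t: assumes "A \<le> r"
  shows "((\<lambda>t. hh (r,t)) has_real_derivative ht (r,\<theta>)) (at \<theta>)"
  unfolding hh_def ht_def fst_conv
  by (rule derivative_eq_intros dF_t[OF assms] refl | simp add: algebra_simps)+

lemma hr_t: assumes "A \<le> r"
  shows "((\<lambda>t. hr (r,t)) has_real_derivative hrt (r,\<theta>)) (at \<theta>)"
  unfolding hr_def hrt_def fst_conv
  by (rule derivative_eq_intros dF_t[OF assms] dFr_t[OF assms] refl | simp add: algebra_simps)+

lemma hh_joint: assumes "x \<in> endH A"
  shows "(hh has_derivative (\<lambda>v. hr x * fst v + ht x * snd v)) (at x within endH A)"
proof -
  have a: "((\<lambda>y. acut A (fst y)) has_derivative (\<lambda>v. acut1 A (fst x) * fst v)) (at x within endH A)"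
    by (rule fst_comp[OF acut_derivs(1)])
  have "((\<lambda>r. sinh (c1 * r)) has_real_derivative cosh (c1 * fst x) * c1) (at (fst x))"
    by (rule derivative_eq_intros refl | simp)+
  then have s: "((\<lambda>y. sinh (c1 * fst y)) has_derivative (\<lambda>v. (cosh (c1 * fst x) * c1) * fst v)) (at x within endH A)"
    by (rule fst_comp)
  have f: "(F has_derivative (\<lambda>v. Fr x * fst v + Ft x * snd v)) (at x within endH A)"
    using dF assms by blast
  have "((\<lambda>y. (1 - acut A (fst y)) * sinh (c1 * fst y) + acut A (fst y) * F y) has_derivative
     (\<lambda>v. (1 - acut A (fst x)) * ((cosh (c1 * fst x) * c1) * fst v) + (- (acut1 A (fst x) * fst v)) * sinh (c1 * fst x)
        + (acut A (fst x) * (Fr x * fst v + Ft x * snd v) + (acut1 A (fst x) * fst v) * F x))) (at x within endH A)"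
  proof -
    have a': "((\<lambda>y. 1 - acut A (fst y)) has_derivative (\<lambda>v. - (acut1 A (fst x) * fst v))) (at x within endH A)"
      using has_derivative_diff[OF has_derivative_const a] by simp
    show ?thesis by (intro has_derivative_add has_derivative_mult a' a s f)
  qed
  moreover have "(\<lambda>v. (1 - acut A (fst x)) * ((cosh (c1 * fst x) * c1) * fst v) + (- (acut1 A (fst x) * fst v)) * sinh (c1 * fst x)
        + (acut A (fst x) * (Fr x * fst v + Ft x * snd v) + (acut1 A (fst x) * fst v) * F x))
     = (\<lambda>v. hr x * fst v + ht x * snd v)"
    by (rule ext) (simp add: hr_def ht_def algebra_simps)
  ultimately show ?thesis unfolding hh_def[abs_def] by simp
qed

lemma S_pos: "A \<le> r \<Longrightarrow> 0 < sinh (c1 * r)"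
  using A_pos c1_pos by simp

lemma hh_pos: assumes r: "A \<le> r" shows "0 < hh (r,\<theta>)"
proof -
  note P = acut_props[of A r]
  have S: "0 < sinh (c1 * r)" using S_pos r .
  have Fp: "0 < F (r,\<theta>)" using Fpos r .
  show ?thesis
  proof (cases "acut A r = 1")
    case True then show ?thesis using Fp by (simp add: hh_def)
  next
    case False
    then have "0 < (1 - acut A r) * sinh (c1 * r)" using P S by simp
    moreover have "0 \<le> acut A r * F (r,\<theta>)" using P Fp by simp
    ultimately show ?thesis by (simp add: hh_def)
  qed
qed

lemma hr_pos: assumes r: "A \<le> r" shows "0 < hr (r,\<theta>)"
proof -
  note P = acut_props[of A r]
  have S: "0 < sinh (c1 * r)" using S_pos r .
  have Fp: "0 < F (r,\<theta>)" using Fpos r .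
  have Frp: "0 < Fr (r,\<theta>)" using Frpos r .
  have t1: "0 \<le> acut1 A r * (F (r,\<theta>) - sinh (c1 * r))"
  proof (cases "acut1 A r = 0")
    case False
    then have "A + 1/2 < r" "r < A + 1" using P(7) by auto
    then have "F (r,\<theta>) \<le> sinh (c1 * r)" using Fbnd by auto
    then show ?thesis using P(3) by (intro mult_nonpos_nonpos) auto
  qed simp
  have t2: "0 < (1 - acut A r) * (c1 * cosh (c1 * r)) + acut A r * Fr (r,\<theta>)"
  proof (cases "acut A r = 0")
    case True then show ?thesis using c1_pos by simp
  next
    case False
    then have "0 < acut A r * Fr (r,\<theta>)" using P Frp by simp
    moreover have "0 \<le> (1 - acut A r) * (c1 * cosh (c1 * r))" using P c1_pos by simp
    ultimately show ?thesis by simp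
  qed
  have "hr (r,\<theta>) = acut1 A r * (F (r,\<theta>) - sinh (c1 * r)) + ((1 - acut A r) * (c1 * cosh (c1 * r)) + acut A r * Fr (r,\<theta>))"
    by (simp add: hr_def algebra_simps)
  then show ?thesis using t1 t2 by simp
qed

lemma hrr_pos: assumes r: "A \<le> r" shows "0 < hrr (r,\<theta>)"
proof -
  note P = acut_props[of A r]
  define S where "S = sinh (c1 * r)"
  define C where "C = cosh (c1 * r)"
  have S: "0 < S" using S_pos r by (simp add: S_def)
  have Fp: "0 < F (r,\<theta>)" using Fpos r .
  have e: "hrr (r,\<theta>) = acut2 A r * (F (r,\<theta>) - S) + 2 * (acut1 A r * (Fr (r,\<theta>) - c1 * C))
      + (1 - acut A r) * (c1^2 * S) + acut A r * Frr (r,\<theta>)"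
    by (simp add: hrr_def S_def C_def algebra_simps)
  show ?thesis
  proof (cases "A + 1 < r")
    case True
    then have "acut A r = 0" "acut1 A r = 0" "acut2 A r = 0" using P(5) by auto
    then show ?thesis using e S c1_pos by simp
  next
    case False
    then have Frr: "0 < Frr (r,\<theta>)" using Frrpos r by simp
    have aFrr: "0 \<le> acut A r * Frr (r,\<theta>)" using P Frr by simp
    have t1: "0 \<le> acut1 A r * (Fr (r,\<theta>) - c1 * C)"
    proof (cases "acut1 A r = 0")
      case False
      then have "A + 1/2 < r" "r < A + 1" using P(7) by auto
      then have "Fr (r,\<theta>) \<le> c1 * C" using Fbnd by (auto simp: C_def)
      then show ?thesis using P(3) by (intro mult_nonpos_nonpos) auto
    qed simp
    have FS: "acut2 A r \<noteq> 0 \<Longrightarrow> F (r,\<theta>) \<le> S"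
    proof -
      assume "acut2 A r \<noteq> 0"
      then have "A + 1/2 < r" "r < A + 1" using P(8) by auto
      then show "F (r,\<theta>) \<le> S" using Fbnd by (auto simp: S_def)
    qed
    show ?thesis
    proof (cases "0 < acut2 A r")
      case True
      then have a: "acut A r \<le> 1/2" "acut2 A r \<le> 60" using P(6) by auto
      have "acut2 A r * (F (r,\<theta>) - S) \<ge> acut2 A r * (- S)"
        using True Fp by (intro mult_left_mono) auto
      moreover have "acut2 A r * (- S) \<ge> - 60 * S" using a S by (simp add: mult_right_mono)
      moreover have "(1 - acut A r) * (c1^2 * S) \<ge> (1/2) * (121 * S)"
      proof (rule mult_mono)
        have "(11::real) * 11 \<le> c1 * c1" using c1_ge by (intro mult_mono) auto
        then show "121 * S \<le> c1^2 * S" using S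
          by (intro mult_right_mono) (auto simp: power2_eq_square)
      qed (use a S c1_pos in auto)
      ultimately show ?thesis using e t1 aFrr S by linarith
    next
    case False
      then have "0 \<le> acut2 A r * (F (r,\<theta>) - S)"
        using FS by (cases "acut2 A r = 0") (auto intro: mult_nonpos_nonpos)
      moreover have "0 < (1 - acut A r) * (c1^2 * S) + acut A r * Frr (r,\<theta>)"
      proof (cases "acut A r = 1")
        case True then show ?thesis using Frr by simp
      next
        case False
        then have "0 < (1 - acut A r) * (c1^2 * S)" using P S c1_pos by simp
        then show ?thesis using aFrr by simp
      qed
      ultimately show ?thesis using e t1 by linarith
    qed
  qed
qed

lemma Fr_per: "A \<le> r \<Longrightarrow> Fr (r, \<theta> + 2*pi) = Fr (r,\<theta>)"
  by (rule deriv_unique_Ici[OF dF_r dF_r]) (auto simp: Fper)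
lemma Frr_per: "A \<le> r \<Longrightarrow> Frr (r, \<theta> + 2*pi) = Frr (r,\<theta>)"
  by (rule deriv_unique_Ici[OF dFr_r dFr_r]) (auto simp: Fr_per)
lemma Ft_per: "A \<le> r \<Longrightarrow> Ft (r, \<theta> + 2*pi) = Ft (r,\<theta>)"
  by (rule deriv_unique_shift[OF dF_t dF_t]) (auto simp: Fper)
lemma Frt_per: "A \<le> r \<Longrightarrow> Frt (r, \<theta> + 2*pi) = Frt (r,\<theta>)"
  by (rule deriv_unique_shift[OF dFr_t dFr_t]) (auto simp: Fr_per)

lemma h_per: assumes "A \<le> r"
  shows "hh (r, \<theta> + 2*pi) = hh (r,\<theta>)" "hr (r, \<theta> + 2*pi) = hr (r,\<theta>)"
    "hrr (r, \<theta> + 2*pi) = hrr (r,\<theta>)" "ht (r, \<theta> + 2*pi) = ht (r,\<theta>)"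
    "hrt (r, \<theta> + 2*pi) = hrt (r,\<theta>)"
  using assms by (simp_all add: hh_def hr_def hrr_def ht_def hrt_def Fper Fr_per Frr_per Ft_per Frt_per)

lemma cont_fst_comp: "continuous_on UNIV \<phi> \<Longrightarrow> continuous_on S (\<lambda>x. \<phi> (fst x :: real))"
proof -
  assume "continuous_on UNIV \<phi>"
  moreover have "continuous_on S (\<lambda>x. fst x :: real)" by (intro continuous_intros)
  ultimately show ?thesis by (rule continuous_on_compose2) auto
qed

lemma cont_basic:
  "continuous_on S (\<lambda>x. acut A (fst x))" "continuous_on S (\<lambda>x. acut1 A (fst x))"
  "continuous_on S (\<lambda>x. acut2 A (fst x))" "continuous_on S (\<lambda>x. sinh (c1 * fst x))"
  "continuous_on S (\<lambda>x. cosh (c1 * fst x))"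
  by (rule cont_fst_comp, (rule acut_cont acut2_cont | intro continuous_intros))+

lemma h_cont:
  "continuous_on (endH A) hh" "continuous_on (endH A) hr" "continuous_on (endH A) hrr"
  "continuous_on (endH A) ht" "continuous_on (endH A) hrt"
  unfolding hh_def[abs_def] hr_def[abs_def] hrr_def[abs_def] ht_def[abs_def] hrt_def[abs_def]
  by (intro continuous_intros cont_basic contF contFr contFt contFrr contFrt)+

lemma hh_pos': "x \<in> endH A \<Longrightarrow> 0 < hh x"
  using hh_pos[of "fst x" "snd x"] by (simp add: endH_def)

lemma far: assumes "A + 1 \<le> r"
  shows "hh (r,\<theta>) = sinh (c1*r)" "hr (r,\<theta>) = c1 * cosh (c1*r)" "hrr (r,\<theta>) = c1^2 * sinh (c1*r)"
    "ht (r,\<theta>) = 0" "hrt (r,\<theta>) = 0"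
  using acut_props(5)[OF assms] by (simp_all add: hh_def hr_def hrr_def ht_def hrt_def)

lemma bnd_all:
  fixes \<Phi> :: "real \<times> real \<Rightarrow> real"
  assumes c: "continuous_on (endH A) \<Phi>" and p: "\<And>r \<theta>. A \<le> r \<Longrightarrow> \<Phi> (r, \<theta> + 2*pi) = \<Phi> (r,\<theta>)"
    and far: "\<And>r \<theta>. A + 1 \<le> r \<Longrightarrow> \<bar>\<Phi> (r,\<theta>)\<bar> \<le> K2"
  shows "\<exists>K. \<forall>r \<theta>. A \<le> r \<longrightarrow> \<bar>\<Phi> (r,\<theta>)\<bar> \<le> K"
proof -
  obtain K1 where K1: "\<forall>r \<theta>. A \<le> r \<longrightarrow> r \<le> A + 1 \<longrightarrow> \<bar>\<Phi> (r,\<theta>)\<bar> \<le> K1"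
    using bounded_periodic[OF c p, of "A+1"] by blast
  show ?thesis
  proof (intro exI allI impI)
    fix r \<theta> assume "A \<le> r"
    then show "\<bar>\<Phi> (r,\<theta>)\<bar> \<le> max K1 K2"
    proof (cases "r \<le> A + 1")
      case True
      then have "\<bar>\<Phi> (r,\<theta>)\<bar> \<le> K1" using K1 \<open>A \<le> r\<close> by blast
      then show ?thesis by (simp add: le_max_iff_disj)
    next
      case False
      then have "\<bar>\<Phi> (r,\<theta>)\<bar> \<le> K2" using far[of r \<theta>] by simp
      then show ?thesis by (simp add: le_max_iff_disj)
    qed
  qed
qed

definition s0 where "s0 = sinh (c1 * A)"
lemma s0_pos: "0 < s0" unfolding s0_def using A_pos c1_pos by simp

lemma far_S: assumes "A + 1 \<le> r"
  shows "0 < sinh (c1*r)" "1 / sinh (c1*r) \<le> 1 / s0" "cosh (c1*r) \<le> sinh (c1*r) + 1"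
    "cosh (c1*r)^2 = sinh (c1*r)^2 + 1"
proof -
  have "c1 * A \<le> c1 * r" using assms c1_pos by (intro mult_left_mono) auto
  then have "s0 \<le> sinh (c1*r)" unfolding s0_def by simp
  then show "0 < sinh (c1*r)" using s0_pos by linarith
  show "1 / sinh (c1*r) \<le> 1 / s0" using s0_pos \<open>s0 \<le> sinh (c1*r)\<close> by (simp add: frac_le)
  have e: "cosh (c1*r) - sinh (c1*r) = exp (-(c1*r))" by (rule cosh_minus_sinh)
  have "0 \<le> c1 * r" using assms A_pos c1_pos by simp
  then have "exp (-(c1*r)) \<le> 1" by simp
  then show "cosh (c1*r) \<le> sinh (c1*r) + 1" using e by linarith
  show "cosh (c1*r)^2 = sinh (c1*r)^2 + 1" by (rule cosh_square_eq)
qed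

definition uu where "uu x = 1 / hh x"
definition gg where "gg x = hr x / hh x"
definition ur where "ur x = - hr x / (hh x)^2"
definition ut where "ut x = - ht x / (hh x)^2"
definition gr where "gr x = (hrr x * hh x - hr x * hr x) / (hh x)^2"
definition gt where "gt x = (hrt x * hh x - hr x * ht x) / (hh x)^2"

lemma hh_nz: "A \<le> r \<Longrightarrow> hh (r,\<theta>) \<noteq> 0" using hh_pos by (metis less_irrefl)

lemma uu_r: assumes r: "A \<le> r" shows "((\<lambda>s. uu (s,\<theta>)) has_real_derivative ur (r,\<theta>)) (at r within {A..})"
  unfolding uu_def ur_def
  by (rule derivative_eq_intros hh_r[OF r] refl | simp add: hh_nz[OF r] power2_eq_square)+
lemma uu_t: assumes r: "A \<le> r" shows "((\<lambda>t. uu (r,t)) has_real_derivative ut (r,\<theta>)) (at \<theta>)"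
  unfolding uu_def ut_def
  by (rule derivative_eq_intros hh_t[OF r] refl | simp add: hh_nz[OF r] power2_eq_square)+
lemma gg_r: assumes r: "A \<le> r" shows "((\<lambda>s. gg (s,\<theta>)) has_real_derivative gr (r,\<theta>)) (at r within {A..})"
  unfolding gg_def gr_def
  by (rule derivative_eq_intros hh_r[OF r] hr_r[OF r] refl | simp add: hh_nz[OF r] power2_eq_square)+
lemma gg_t: assumes r: "A \<le> r" shows "((\<lambda>t. gg (r,t)) has_real_derivative gt (r,\<theta>)) (at \<theta>)"
  unfolding gg_def gt_def
  by (rule derivative_eq_intros hh_t[OF r] hr_t[OF r] refl | simp add: hh_nz[OF r] power2_eq_square)+

lemma hh_nz': "\<forall>x\<in>endH A. hh x \<noteq> 0" "\<forall>x\<in>endH A. (hh x)^2 \<noteq> 0"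
proof -
  have "hh x \<noteq> 0" if "x \<in> endH A" for x using hh_pos'[OF that] by linarith
  then show "\<forall>x\<in>endH A. hh x \<noteq> 0" "\<forall>x\<in>endH A. (hh x)^2 \<noteq> 0" by auto
qed

lemma ug_cont: "continuous_on (endH A) uu" "continuous_on (endH A) gg" "continuous_on (endH A) ur"
  "continuous_on (endH A) ut" "continuous_on (endH A) gr" "continuous_on (endH A) gt"
  unfolding uu_def[abs_def] gg_def[abs_def] ur_def[abs_def] ut_def[abs_def] gr_def[abs_def] gt_def[abs_def]
  by (intro continuous_intros h_cont hh_nz')+

lemma ug_per: assumes "A \<le> r"
  shows "uu (r, \<theta> + 2*pi) = uu (r,\<theta>)" "gg (r, \<theta> + 2*pi) = gg (r,\<theta>)" "ur (r, \<theta> + 2*pi) = ur (r,\<theta>)"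
   "ut (r, \<theta> + 2*pi) = ut (r,\<theta>)" "gr (r, \<theta> + 2*pi) = gr (r,\<theta>)" "gt (r, \<theta> + 2*pi) = gt (r,\<theta>)"
  using h_per[OF assms] by (simp_all add: uu_def gg_def ur_def ut_def gr_def gt_def)

lemma real_bnds:
  fixes s0 S C c :: real
  assumes "0 < s0" "s0 \<le> S" "0 \<le> C" "C \<le> S + 1" "0 \<le> c"
  shows "\<bar>1 / S\<bar> \<le> 1 / s0" "\<bar>c * C / S\<bar> \<le> c * (1 + 1 / s0)" "\<bar>- (c * C) / S^2\<bar> \<le> c * (1 / s0 + 1 / s0^2)"
    "1 / S^2 \<le> 1 / s0^2"
proof -
  have S: "0 < S" using assms by linarith
  have i: "1 / S \<le> 1 / s0" using assms S by (simp add: frac_le)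
  then show "\<bar>1 / S\<bar> \<le> 1 / s0" using S by simp
  have i2: "1 / S^2 \<le> 1 / s0^2" using assms S by (intro frac_le) (auto intro: power_mono)
  then show "1 / S^2 \<le> 1 / s0^2" .
  have "C / S \<le> (S + 1) / S" using assms S by (intro divide_right_mono) auto
  also have "\<dots> = 1 + 1 / S" using S by (simp add: field_simps)
  finally have "C / S \<le> 1 + 1 / s0" using i by linarith
  then have "c * (C / S) \<le> c * (1 + 1 / s0)" using assms by (intro mult_left_mono) auto
  moreover have "0 \<le> c * C / S" using assms S by simp
  ultimately show "\<bar>c * C / S\<bar> \<le> c * (1 + 1 / s0)" by simp
  have "C / S^2 \<le> (S + 1) / S^2" using assms S by (intro divide_right_mono) auto
  also have "\<dots> = 1 / S + 1 / S^2" using S by (simp add: field_simps power2_eq_square)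
  finally have "C / S^2 \<le> 1 / s0 + 1 / s0^2" using i i2 by linarith
  then have "c * (C / S^2) \<le> c * (1 / s0 + 1 / s0^2)" using assms by (intro mult_left_mono) auto
  moreover have "0 \<le> c * C / S^2" using assms S by simp
  ultimately show "\<bar>- (c * C) / S^2\<bar> \<le> c * (1 / s0 + 1 / s0^2)" by simp
qed

lemma far_bnds: assumes r: "A + 1 \<le> r"
  shows "\<bar>uu (r,\<theta>)\<bar> \<le> 1 / s0" "\<bar>gg (r,\<theta>)\<bar> \<le> c1 * (1 + 1 / s0)"
    "\<bar>ur (r,\<theta>)\<bar> \<le> c1 * (1 / s0 + 1 / s0^2)" "\<bar>ut (r,\<theta>)\<bar> \<le> 0"
    "\<bar>gr (r,\<theta>)\<bar> \<le> c1^2 * (1 / s0^2)" "\<bar>gt (r,\<theta>)\<bar> \<le> 0"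
proof -
  note fS = far_S[OF r]
  have s: "s0 \<le> sinh (c1*r)"
  proof -
    have "c1 * A \<le> c1 * r" using r c1_pos by (intro mult_left_mono) auto
    then show ?thesis unfolding s0_def by simp
  qed
  have c0: "0 \<le> cosh (c1*r)" by simp
  have cc: "0 \<le> c1" using c1_pos by simp
  note B = real_bnds[OF s0_pos s c0 fS(3) cc]
  note fr = far[OF r]
  show "\<bar>uu (r,\<theta>)\<bar> \<le> 1 / s0" unfolding uu_def fr(1) by (rule B(1))
  show "\<bar>gg (r,\<theta>)\<bar> \<le> c1 * (1 + 1 / s0)" unfolding gg_def fr(1) fr(2) by (rule B(2))
  show "\<bar>ur (r,\<theta>)\<bar> \<le> c1 * (1 / s0 + 1 / s0^2)" unfolding ur_def fr(1) fr(2) by (rule B(3))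
  show "\<bar>ut (r,\<theta>)\<bar> \<le> 0" by (simp add: ut_def fr)
  show "\<bar>gt (r,\<theta>)\<bar> \<le> 0" by (simp add: gt_def fr)
  have "gr (r,\<theta>) = - (c1^2 * (1 / sinh (c1*r)^2))"
    using fS by (simp add: gr_def fr field_simps power2_eq_square)
  moreover have "c1^2 * (1 / sinh (c1*r)^2) \<le> c1^2 * (1 / s0^2)"
    using B by (intro mult_left_mono) auto
  moreover have "0 \<le> c1^2 * (1 / sinh (c1*r)^2)" by simp
  ultimately show "\<bar>gr (r,\<theta>)\<bar> \<le> c1^2 * (1 / s0^2)" by simp
qed

lemma ug_bounds: "\<exists>Ku Kg Lu Lg. 0 < Ku \<and> 0 < Kg \<and> 0 < Lu \<and> 0 < Lg
   \<and> (\<forall>r \<theta>. A \<le> r \<longrightarrow> \<bar>uu (r,\<theta>)\<bar> \<le> Ku \<and> \<bar>gg (r,\<theta>)\<bar> \<le> Kg)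
   \<and> (\<forall>r1 r2 t1 t2. A \<le> r1 \<longrightarrow> A \<le> r2 \<longrightarrow>
        \<bar>uu (r1,t1) - uu (r2,t2)\<bar> \<le> Lu * (\<bar>r1 - r2\<bar> + \<bar>t1 - t2\<bar>)
      \<and> \<bar>gg (r1,t1) - gg (r2,t2)\<bar> \<le> Lg * (\<bar>r1 - r2\<bar> + \<bar>t1 - t2\<bar>))"
proof -
  obtain K1 where K1: "\<forall>r \<theta>. A \<le> r \<longrightarrow> \<bar>uu (r,\<theta>)\<bar> \<le> K1"
    using bnd_all[OF ug_cont(1) ug_per(1) far_bnds(1)] by blast
  obtain K2 where K2: "\<forall>r \<theta>. A \<le> r \<longrightarrow> \<bar>gg (r,\<theta>)\<bar> \<le> K2"
    using bnd_all[OF ug_cont(2) ug_per(2) far_bnds(2)] by blast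
  obtain K3 where K3: "\<forall>r \<theta>. A \<le> r \<longrightarrow> \<bar>ur (r,\<theta>)\<bar> \<le> K3"
    using bnd_all[OF ug_cont(3) ug_per(3) far_bnds(3)] by blast
  obtain K4 where K4: "\<forall>r \<theta>. A \<le> r \<longrightarrow> \<bar>ut (r,\<theta>)\<bar> \<le> K4"
    using bnd_all[OF ug_cont(4) ug_per(4) far_bnds(4)] by blast
  obtain K5 where K5: "\<forall>r \<theta>. A \<le> r \<longrightarrow> \<bar>gr (r,\<theta>)\<bar> \<le> K5"
    using bnd_all[OF ug_cont(5) ug_per(5) far_bnds(5)] by blast
  obtain K6 where K6: "\<forall>r \<theta>. A \<le> r \<longrightarrow> \<bar>gt (r,\<theta>)\<bar> \<le> K6"
    using bnd_all[OF ug_cont(6) ug_per(6) far_bnds(6)] by blast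
  define Lu where "Lu = max 1 (max K3 K4)"
  define Lg where "Lg = max 1 (max K5 K6)"
  have lu: "\<bar>uu (r1,t1) - uu (r2,t2)\<bar> \<le> Lu * (\<bar>r1 - r2\<bar> + \<bar>t1 - t2\<bar>)" if "A \<le> r1" "A \<le> r2" for r1 r2 t1 t2
  proof (rule lip2[OF uu_r uu_t _ _ that])
    fix r \<theta> assume "A \<le> (r::real)"
    then have "\<bar>ur (r,\<theta>)\<bar> \<le> K3" "\<bar>ut (r,\<theta>)\<bar> \<le> K4" using K3 K4 by auto
    then show "\<bar>ur (r,\<theta>)\<bar> \<le> Lu" "\<bar>ut (r,\<theta>)\<bar> \<le> Lu" unfolding Lu_def by (simp_all add: le_max_iff_disj)
  qed
  have lg: "\<bar>gg (r1,t1) - gg (r2,t2)\<bar> \<le> Lg * (\<bar>r1 - r2\<bar> + \<bar>t1 - t2\<bar>)" if "A \<le> r1" "A \<le> r2" for r1 r2 t1 t2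
  proof (rule lip2[OF gg_r gg_t _ _ that])
    fix r \<theta> assume "A \<le> (r::real)"
    then have "\<bar>gr (r,\<theta>)\<bar> \<le> K5" "\<bar>gt (r,\<theta>)\<bar> \<le> K6" using K5 K6 by auto
    then show "\<bar>gr (r,\<theta>)\<bar> \<le> Lg" "\<bar>gt (r,\<theta>)\<bar> \<le> Lg" unfolding Lg_def by (simp_all add: le_max_iff_disj)
  qed
  show ?thesis
  proof (intro exI conjI allI impI)
    show "0 < max 1 K1" "0 < max 1 K2" "0 < Lu" "0 < Lg" by (auto simp: Lu_def Lg_def)
  next
    fix r \<theta> assume "A \<le> (r::real)"
    then have "\<bar>uu (r,\<theta>)\<bar> \<le> K1" "\<bar>gg (r,\<theta>)\<bar> \<le> K2" using K1 K2 by auto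
    then show "\<bar>uu (r,\<theta>)\<bar> \<le> max 1 K1" "\<bar>gg (r,\<theta>)\<bar> \<le> max 1 K2" by (simp_all add: le_max_iff_disj)
  qed (use lu lg in auto)
qed

definition fld :: "real \<Rightarrow> real \<times> real \<times> real \<Rightarrow> real \<times> real \<times> real" where
  "fld \<rho> z = (\<rho> * cos (snd (snd z)),
              \<rho> * (sin (snd (snd z)) * uu (max (fst z) A, fst (snd z))),
              - (\<rho> * (sin (snd (snd z)) * gg (max (fst z) A, fst (snd z)))))"

lemma fld_lip: assumes rho: "0 < \<rho>"
  shows "\<exists>K>0. \<forall>x y. norm (fld \<rho> x - fld \<rho> y) \<le> K * norm (x - y)"
proof -
  obtain Ku Kg Lu Lg where pos: "0 < Ku" "0 < Kg" "0 < Lu" "0 < Lg"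
    and B: "\<forall>r \<theta>. A \<le> r \<longrightarrow> \<bar>uu (r,\<theta>)\<bar> \<le> Ku \<and> \<bar>gg (r,\<theta>)\<bar> \<le> Kg"
    and L: "\<forall>r1 r2 t1 t2. A \<le> r1 \<longrightarrow> A \<le> r2 \<longrightarrow>
        \<bar>uu (r1,t1) - uu (r2,t2)\<bar> \<le> Lu * (\<bar>r1 - r2\<bar> + \<bar>t1 - t2\<bar>)
      \<and> \<bar>gg (r1,t1) - gg (r2,t2)\<bar> \<le> Lg * (\<bar>r1 - r2\<bar> + \<bar>t1 - t2\<bar>)"
    using ug_bounds by blast
  define M where "M = 1 + Ku + Kg + Lu + Lg"
  have M: "0 < M" using pos by (simp add: M_def)
  show ?thesis
  proof (intro exI conjI allI)
    show "0 < 9 * \<rho> * M" using M rho by simp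
    fix x y :: "real \<times> real \<times> real"
    obtain r1 t1 p1 where x: "x = (r1,t1,p1)" by (cases x) auto
    obtain r2 t2 p2 where y: "y = (r2,t2,p2)" by (cases y) auto
    define n where "n = norm (x - y)"
    have dr: "\<bar>r1 - r2\<bar> \<le> n" and dt: "\<bar>t1 - t2\<bar> \<le> n" and dp: "\<bar>p1 - p2\<bar> \<le> n"
      using comp_norms[of x y] by (simp_all add: x y n_def)
    have mr: "\<bar>max r1 A - max r2 A\<bar> \<le> \<bar>r1 - r2\<bar>" unfolding max_def abs_if by auto
    have Lu': "\<bar>uu (max r1 A, t1) - uu (max r2 A, t2)\<bar> \<le> Lu * (2 * n)"
    proof -
      have "\<bar>uu (max r1 A, t1) - uu (max r2 A, t2)\<bar> \<le> Lu * (\<bar>max r1 A - max r2 A\<bar> + \<bar>t1 - t2\<bar>)"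
        using L by auto
      also have "\<dots> \<le> Lu * (2 * n)" using pos mr dr dt by (intro mult_left_mono) auto
      finally show ?thesis .
    qed
    have Lg': "\<bar>gg (max r1 A, t1) - gg (max r2 A, t2)\<bar> \<le> Lg * (2 * n)"
    proof -
      have "\<bar>gg (max r1 A, t1) - gg (max r2 A, t2)\<bar> \<le> Lg * (\<bar>max r1 A - max r2 A\<bar> + \<bar>t1 - t2\<bar>)"
        using L by auto
      also have "\<dots> \<le> Lg * (2 * n)" using pos mr dr dt by (intro mult_left_mono) auto
      finally show ?thesis .
    qed
    have c1': "\<bar>\<rho> * cos p1 - \<rho> * cos p2\<bar> \<le> \<rho> * n"
    proof -
      have "\<bar>\<rho> * cos p1 - \<rho> * cos p2\<bar> = \<rho> * \<bar>cos p1 - cos p2\<bar>" using rho by (simp add: abs_mult right_diff_distrib[symmetric])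
      also have "\<dots> \<le> \<rho> * n" using cos_lip[of p1 p2] dp rho by (intro mult_left_mono) auto
      finally show ?thesis .
    qed
    have c2: "\<bar>\<rho> * (sin p1 * uu (max r1 A, t1)) - \<rho> * (sin p2 * uu (max r2 A, t2))\<bar> \<le> \<rho> * (Lu * (2 * n) + Ku * n)"
    proof -
      have "\<bar>sin p1 * uu (max r1 A, t1) - sin p2 * uu (max r2 A, t2)\<bar> \<le> Lu * (2 * n) + Ku * \<bar>p1 - p2\<bar>"
        by (rule prod_lip[OF Lu']) (use B in auto)
      also have "\<dots> \<le> Lu * (2 * n) + Ku * n" using dp pos by (simp add: mult_left_mono)
      finally show ?thesis using rho by (simp add: abs_mult right_diff_distrib[symmetric] mult_left_mono)
    qed
    have c3: "\<bar>- (\<rho> * (sin p1 * gg (max r1 A, t1))) - - (\<rho> * (sin p2 * gg (max r2 A, t2)))\<bar> \<le> \<rho> * (Lg * (2 * n) + Kg * n)"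
    proof -
      have "\<bar>sin p1 * gg (max r1 A, t1) - sin p2 * gg (max r2 A, t2)\<bar> \<le> Lg * (2 * n) + Kg * \<bar>p1 - p2\<bar>"
        by (rule prod_lip[OF Lg']) (use B in auto)
      also have "\<dots> \<le> Lg * (2 * n) + Kg * n" using dp pos by (simp add: mult_left_mono)
      finally have "\<bar>\<rho> * (sin p1 * gg (max r1 A, t1)) - \<rho> * (sin p2 * gg (max r2 A, t2))\<bar> \<le> \<rho> * (Lg * (2 * n) + Kg * n)"
        using rho by (simp add: abs_mult right_diff_distrib[symmetric] mult_left_mono)
      then show ?thesis by (simp add: abs_minus_commute)
    qed
    have "norm (fld \<rho> x - fld \<rho> y) \<le> \<rho> * n + \<rho> * (Lu * (2 * n) + Ku * n) + \<rho> * (Lg * (2 * n) + Kg * n)"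
      using norm_triple c1' c2 c3 unfolding fld_def x y
      by (smt (verit) fst_conv snd_conv prod.simps minus_prod_def)
    also have "\<dots> \<le> 9 * \<rho> * M * n"
    proof -
      have "0 \<le> n" by (simp add: n_def)
      then show ?thesis using rho pos unfolding M_def by (simp add: algebra_simps mult_left_mono)
    qed
    finally show "norm (fld \<rho> x - fld \<rho> y) \<le> 9 * \<rho> * M * norm (x - y)" by (simp add: n_def)
  qed
qed

definition ftc :: "real \<Rightarrow> real \<Rightarrow> real" where "ftc r \<theta> = hh (r,\<theta>)"

lemma rderiv_ftc: assumes r: "A \<le> r" shows "rderiv A ftc r \<theta> = hr (r,\<theta>)"
proof -
  have "rderiv A ftc r \<theta> = rderiv1 A (\<lambda>s. hh (s,\<theta>)) r" by (simp add: rderiv_def ftc_def)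
  also have "\<dots> = hr (r,\<theta>)" by (rule rderiv1_eq[OF hh_r[OF r] _ r]) (rule refl)
  finally show ?thesis .
qed

lemma rderiv2_ftc: assumes r: "A \<le> r" shows "rderiv A (rderiv A ftc) r \<theta> = hrr (r,\<theta>)"
proof -
  have "rderiv A (rderiv A ftc) r \<theta> = rderiv1 A (\<lambda>s. rderiv A ftc s \<theta>) r" by (simp only: rderiv_def)
  also have "\<dots> = hrr (r,\<theta>)" by (rule rderiv1_eq[OF hr_r[OF r] _ r]) (rule rderiv_ftc)
  finally show ?thesis .
qed

lemma thderiv_ftc: assumes r: "A \<le> r" shows "thderiv ftc r \<theta> = ht (r,\<theta>)"
proof -
  have "thderiv ftc r \<theta> = deriv (\<lambda>t. hh (r,t)) \<theta>" by (simp add: thderiv_def ftc_def)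
  also have "\<dots> = ht (r,\<theta>)" by (rule DERIV_imp_deriv[OF hh_t[OF r]])
  finally show ?thesis .
qed

lemma gauss_neg: assumes r: "A \<le> r" shows "gauss_curv A ftc r \<theta> < 0"
proof -
  have "gauss_curv A ftc r \<theta> = - hrr (r,\<theta>) / hh (r,\<theta>)"
    by (simp only: gauss_curv_def rderiv2_ftc[OF r] ftc_def)
  also have "\<dots> < 0" using hrr_pos[OF r] hh_pos[OF r] by (simp add: divide_neg_pos)
  finally show ?thesis .
qed

lemma radial_accel:
  assumes "open I" "geodesic_on A ftc I R \<Theta> R' \<Theta>'" "t \<in> I" "\<Theta>' t \<noteq> 0"
  shows "deriv R' t > 0"
proof -
  have all: "A \<le> R t \<and> (R has_real_derivative R' t) (at t within I)
      \<and> (\<Theta> has_real_derivative \<Theta>' t) (at t within I)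
      \<and> (R' has_real_derivative (ftc (R t) (\<Theta> t) * rderiv A ftc (R t) (\<Theta> t) * (\<Theta>' t)\<^sup>2)) (at t within I)
      \<and> (\<Theta>' has_real_derivative
            (- 2 * rderiv A ftc (R t) (\<Theta> t) / ftc (R t) (\<Theta> t) * R' t * \<Theta>' t
             - thderiv ftc (R t) (\<Theta> t) / ftc (R t) (\<Theta> t) * (\<Theta>' t)\<^sup>2)) (at t within I)"
    using assms(2) assms(3) unfolding geodesic_on_def by (rule bspec)
  then have r: "A \<le> R t"
    and d: "(R' has_real_derivative (ftc (R t) (\<Theta> t) * rderiv A ftc (R t) (\<Theta> t) * (\<Theta>' t)\<^sup>2)) (at t within I)"
    by blast+
  have "at t within I = at t" by (rule at_within_open[OF assms(3) assms(1)])
  then have d': "(R' has_real_derivative (ftc (R t) (\<Theta> t) * rderiv A ftc (R t) (\<Theta> t) * (\<Theta>' t)\<^sup>2)) (at t)"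
    using d by (simp only:)
  have "deriv R' t = ftc (R t) (\<Theta> t) * rderiv A ftc (R t) (\<Theta> t) * (\<Theta>' t)\<^sup>2"
    by (rule DERIV_imp_deriv[OF d'])
  also have "\<dots> = hh (R t, \<Theta> t) * hr (R t, \<Theta> t) * (\<Theta>' t)\<^sup>2" using r by (simp add: rderiv_ftc ftc_def)
  also have "\<dots> > 0" using hh_pos[OF r] hr_pos[OF r] assms(4) by simp
  finally show ?thesis .
qed

lemma gg_pos: "A \<le> r \<Longrightarrow> 0 < gg (r,\<theta>)"
  unfolding gg_def using hr_pos hh_pos by simp

lemma geo_exist:
  assumes r0: "A \<le> r0" and v: "(vr, v\<theta>) \<noteq> (0, 0)"
  shows "\<exists>\<sigma>\<in>{1, -1}. \<exists>R \<Theta> R' \<Theta>'. geodesic_on A ftc {0..} R \<Theta> R' \<Theta>'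
     \<and> R 0 = r0 \<and> \<Theta> 0 = \<theta>0 \<and> R' 0 = \<sigma> * vr \<and> \<Theta>' 0 = \<sigma> * v\<theta>
     \<and> filterlim R at_top at_top"
proof -
  define h0 where "h0 = hh (r0,\<theta>0)"
  have h0: "0 < h0" unfolding h0_def using hh_pos[OF r0] .
  define \<sigma> :: real where "\<sigma> = (if 0 \<le> vr then 1 else -1)"
  have \<sigma>: "\<sigma> \<in> {1,-1}" "\<sigma> * \<sigma> = 1" "0 \<le> \<sigma> * vr" unfolding \<sigma>_def by auto
  define \<rho> where "\<rho> = sqrt (vr^2 + (v\<theta> * h0)^2)"
  have ss: "0 < vr^2 + (v\<theta> * h0)^2"
  proof (cases "vr = 0")
    case True
    then have "v\<theta> \<noteq> 0" using v by auto
    then show ?thesis using h0 True by simp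
  next
    case False then show ?thesis by (simp add: add_pos_nonneg)
  qed
  then have rho: "0 < \<rho>" unfolding \<rho>_def by simp
  have rho2: "\<rho>^2 = vr^2 + (v\<theta> * h0)^2" unfolding \<rho>_def using ss by simp
  have s2: "\<sigma>^2 = 1" using \<sigma>(2) by (simp add: power2_eq_square)
  have "(\<sigma> * vr / \<rho>)^2 + (\<sigma> * v\<theta> * h0 / \<rho>)^2 = (vr^2 + (v\<theta> * h0)^2) / \<rho>^2"
    by (simp add: power_divide power_mult_distrib s2 add_divide_distrib)
  also have "\<dots> = 1" unfolding rho2[symmetric] using rho by simp
  finally have "(\<sigma> * vr / \<rho>)^2 + (\<sigma> * v\<theta> * h0 / \<rho>)^2 = 1" .
  then obtain \<phi>0 where cs: "\<sigma> * vr / \<rho> = cos \<phi>0" "\<sigma> * v\<theta> * h0 / \<rho> = sin \<phi>0"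
    using sincos_total_2pi by blast
  obtain K where K: "0 < K" "\<And>x y. norm (fld \<rho> x - fld \<rho> y) \<le> K * norm (x - y)"
    using fld_lip[OF rho] by blast
  obtain y where y0: "y 0 = (r0, \<theta>0, \<phi>0)"
    and dy: "\<And>t. 0 \<le> t \<Longrightarrow> (y has_vector_derivative fld \<rho> (y t)) (at t within {0..})"
    using picard_global[OF K, of "(r0, \<theta>0, \<phi>0)"] by blast
  define R where "R t = fst (y t)" for t
  define \<Theta> where "\<Theta> t = fst (snd (y t))" for t
  define \<Phi> where "\<Phi> t = snd (snd (y t))" for t
  define R' where "R' t = \<rho> * cos (\<Phi> t)" for t
  have dR: "(R has_real_derivative R' t) (at t within {0..})" if "0 \<le> t" for t
    using hvd_fst[OF dy[OF that]] unfolding R_def R'_def \<Phi>_def fld_def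
    by (simp add: has_real_derivative_iff_has_vector_derivative)
  have d\<Theta>0: "(\<Theta> has_real_derivative \<rho> * (sin (\<Phi> t) * uu (max (R t) A, \<Theta> t))) (at t within {0..})" if "0 \<le> t" for t
    using hvd_fst[OF hvd_snd[OF dy[OF that]]] unfolding R_def \<Theta>_def \<Phi>_def fld_def
    by (simp add: has_real_derivative_iff_has_vector_derivative)
  have d\<Phi>: "(\<Phi> has_real_derivative - (\<rho> * (sin (\<Phi> t) * gg (max (R t) A, \<Theta> t)))) (at t within {0..})" if "0 \<le> t" for t
    using hvd_snd[OF hvd_snd[OF dy[OF that]]] unfolding R_def \<Theta>_def \<Phi>_def fld_def
    by (simp add: has_real_derivative_iff_has_vector_derivative)
  define G where "G t = \<rho>^2 * (sin (\<Phi> t))^2 * gg (max (R t) A, \<Theta> t)" for t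
  have dR': "(R' has_real_derivative G t) (at t within {0..})" if "0 \<le> t" for t
    unfolding R'_def[abs_def] G_def
    by (rule derivative_eq_intros d\<Phi>[OF that] refl | simp add: power2_eq_square)+
  have G0: "0 \<le> G t" for t
    unfolding G_def using gg_pos[of "max (R t) A" "\<Theta> t"] by simp
  have R'mono: "R' a \<le> R' b" if "0 \<le> a" "a \<le> b" for a b
    by (rule mono_Ici[OF dR' G0 that])
  have R'0: "R' 0 = \<sigma> * vr"
    unfolding R'_def \<Phi>_def using y0 cs(1) rho by (simp add: field_simps)
  have R'nn: "0 \<le> R' t" if "0 \<le> t" for t using R'mono[OF _ that] R'0 \<sigma>(3) by simp
  have Rmono: "R a \<le> R b" if "0 \<le> a" "a \<le> b" for a b
    by (rule mono_Ici[OF dR _ that]) (use R'nn that in auto)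
  have R0: "R 0 = r0" unfolding R_def using y0 by simp
  have RA: "A \<le> R t" if "0 \<le> t" for t using Rmono[OF _ that] R0 r0 by simp
  define \<Theta>' where "\<Theta>' t = \<rho> * sin (\<Phi> t) / hh (R t, \<Theta> t)" for t
  have d\<Theta>: "(\<Theta> has_real_derivative \<Theta>' t) (at t within {0..})" if "0 \<le> t" for t
    using d\<Theta>0[OF that] RA[OF that] by (simp add: \<Theta>'_def uu_def max_absorb1)
  have dPhi': "(\<Phi> has_real_derivative - (\<rho> * (sin (\<Phi> t) * (hr (R t, \<Theta> t) / hh (R t, \<Theta> t))))) (at t within {0..})"
    if "0 \<le> t" for t
    using d\<Phi>[OF that] RA[OF that] by (simp add: gg_def max_absorb1)
  have dH: "((\<lambda>t. hh (R t, \<Theta> t)) has_real_derivative hr (R t, \<Theta> t) * R' t + ht (R t, \<Theta> t) * \<Theta>' t) (at t within {0..})"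
    if t: "0 \<le> t" for t
  proof -
    have p: "((\<lambda>t. (R t, \<Theta> t)) has_derivative (\<lambda>h. (R' t * h, \<Theta>' t * h))) (at t within {0..})"
      using dR[OF t] d\<Theta>[OF t] unfolding has_field_derivative_def by (rule has_derivative_Pair)
    have sub: "(\<lambda>t. (R t, \<Theta> t)) ` {0..} \<subseteq> endH A" using RA by (auto simp: endH_def)
    have "((\<lambda>t. hh (R t, \<Theta> t)) has_derivative
        (\<lambda>h. hr (R t, \<Theta> t) * fst (R' t * h, \<Theta>' t * h) + ht (R t, \<Theta> t) * snd (R' t * h, \<Theta>' t * h))) (at t within {0..})"
      by (rule has_derivative_in_compose2[OF hh_joint sub _ p]) (use t in auto)
    moreover have "(\<lambda>h. hr (R t, \<Theta> t) * fst (R' t * h, \<Theta>' t * h) + ht (R t, \<Theta> t) * snd (R' t * h, \<Theta>' t * h))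
       = (*) (hr (R t, \<Theta> t) * R' t + ht (R t, \<Theta> t) * \<Theta>' t)"
      by (rule ext) (simp add: algebra_simps)
    ultimately show ?thesis unfolding has_field_derivative_def by simp
  qed
  have geo: "geodesic_on A ftc {0..} R \<Theta> R' \<Theta>'"
    unfolding geodesic_on_def
  proof (intro ballI conjI)
    fix t :: real assume "t \<in> {0..}"
    then have t: "0 \<le> t" by simp
    note rt = RA[OF t]
    have hpos: "0 < hh (R t, \<Theta> t)" using hh_pos[OF rt] .
    show "A \<le> R t" by (rule rt)
    show "(R has_real_derivative R' t) (at t within {0..})" by (rule dR[OF t])
    show "(\<Theta> has_real_derivative \<Theta>' t) (at t within {0..})" by (rule d\<Theta>[OF t])
    have "G t = ftc (R t) (\<Theta> t) * rderiv A ftc (R t) (\<Theta> t) * (\<Theta>' t)\<^sup>2"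
      unfolding G_def \<Theta>'_def using hpos rt
      by (simp add: rderiv_ftc ftc_def gg_def max_absorb1 field_simps power2_eq_square)
    then show "(R' has_real_derivative ftc (R t) (\<Theta> t) * rderiv A ftc (R t) (\<Theta> t) * (\<Theta>' t)\<^sup>2) (at t within {0..})"
      using dR'[OF t] by simp
    have "(\<Theta>' has_real_derivative
        (\<rho> * (cos (\<Phi> t) * (- (\<rho> * (sin (\<Phi> t) * (hr (R t, \<Theta> t) / hh (R t, \<Theta> t)))))) * hh (R t, \<Theta> t)
          - \<rho> * sin (\<Phi> t) * (hr (R t, \<Theta> t) * R' t + ht (R t, \<Theta> t) * \<Theta>' t)) / (hh (R t, \<Theta> t))^2)
        (at t within {0..})"
      unfolding \<Theta>'_def[abs_def]
      by (rule derivative_eq_intros dPhi'[OF t] dH[OF t, unfolded \<Theta>'_def] refl | simp add: hpos less_imp_neq[OF hpos, symmetric] power2_eq_square)+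
    moreover have "(\<rho> * (cos (\<Phi> t) * (- (\<rho> * (sin (\<Phi> t) * (hr (R t, \<Theta> t) / hh (R t, \<Theta> t)))))) * hh (R t, \<Theta> t)
          - \<rho> * sin (\<Phi> t) * (hr (R t, \<Theta> t) * R' t + ht (R t, \<Theta> t) * \<Theta>' t)) / (hh (R t, \<Theta> t))^2
       = - 2 * rderiv A ftc (R t) (\<Theta> t) / ftc (R t) (\<Theta> t) * R' t * \<Theta>' t
             - thderiv ftc (R t) (\<Theta> t) / ftc (R t) (\<Theta> t) * (\<Theta>' t)\<^sup>2"
      unfolding rderiv_ftc[OF rt] thderiv_ftc[OF rt] ftc_def R'_def \<Theta>'_def using hpos
      by (simp add: field_simps power2_eq_square)
    ultimately show "(\<Theta>' has_real_derivative
            (- 2 * rderiv A ftc (R t) (\<Theta> t) / ftc (R t) (\<Theta> t) * R' t * \<Theta>' t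
             - thderiv ftc (R t) (\<Theta> t) / ftc (R t) (\<Theta> t) * (\<Theta>' t)\<^sup>2)) (at t within {0..})"
      by simp
  qed
  have Th0: "\<Theta> 0 = \<theta>0" unfolding \<Theta>_def using y0 by simp
  have Th'0: "\<Theta>' 0 = \<sigma> * v\<theta>"
  proof -
    have "\<Theta>' 0 = \<rho> * sin \<phi>0 / h0" unfolding \<Theta>'_def \<Phi>_def h0_def using y0 R0 Th0 by (simp add: R_def \<Theta>_def)
    also have "\<dots> = \<sigma> * v\<theta>" using cs(2)[symmetric] rho h0 by (simp add: field_simps)
    finally show ?thesis .
  qed
  have esc: "filterlim R at_top at_top"
  proof (cases "\<exists>t1\<ge>0. 0 < R' t1")
    case True
    then obtain t1 where t1: "0 \<le> t1" "0 < R' t1" by blast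
    show ?thesis
    proof (rule lin_escape[OF t1(2), where Tz=t1 and c="R t1 - R' t1 * t1"])
      fix t assume tt: "t1 \<le> t"
      have "(\<lambda>s. R s - R' t1 * s) t1 \<le> (\<lambda>s. R s - R' t1 * s) t"
      proof (rule mono_Ici[where f'="\<lambda>s. R' s - R' t1" and f="\<lambda>s. R s - R' t1 * s"])
        fix s :: real assume s: "0 \<le> s"
        show "((\<lambda>s. R s - R' t1 * s) has_real_derivative R' s - R' t1) (at s within {0..})"
          by (rule derivative_eq_intros dR[OF s] refl | simp)+
      next
        fix s :: real assume s: "t1 < s"
        show "0 \<le> R' s - R' t1" using R'mono[OF t1(1)] s by simp
      qed (use t1 tt in auto)
      then show "R t1 - R' t1 * t1 + R' t1 * t \<le> R t" by simp
    qed
  next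
    case False
    then have z: "R' t = 0" if "0 \<le> t" for t using R'nn[OF that] that by force
    have c1': "cos (\<Phi> 1) = 0" using z[of 1] rho by (simp add: R'_def)
    then have "(sin (\<Phi> 1))^2 = 1" using sin_cos_squared_add[of "\<Phi> 1"] by simp
    then have Gp: "0 < G 1" unfolding G_def using rho gg_pos[of "max (R 1) A" "\<Theta> 1"] by simp
    have "(R' has_real_derivative 0) (at 1 within {0..})"
      by (rule has_field_derivative_transform_within[where f="\<lambda>_. 0" and d=1]) (auto simp: z)
    moreover have "at (1::real) within {0..} \<noteq> bot" by (simp add: Ici_at)
    ultimately have "G 1 = 0" using dR'[of 1] has_field_derivative_unique by auto
    then show ?thesis using Gp by simp
  qed
  show ?thesis
    using \<sigma>(1) geo R0 Th0 R'0 Th'0 esc by blast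
qed

end

lemma geo_core:
  fixes fk :: "real \<Rightarrow> real \<Rightarrow> real"
  assumes G: "geo A c1 (\<lambda>(r,\<theta>). fk r \<theta>) Fr Ft Frr Frt"
  defines "ftk \<equiv> (\<lambda>r \<theta>. (1 - acut A r) * sinh (c1 * r) + acut A r * fk r \<theta>)"
  shows "(\<forall>r \<theta>. A \<le> r \<longrightarrow> gauss_curv A ftk r \<theta> < 0)
   \<and> (\<forall>I R \<Theta> R' \<Theta>' t. open I \<and> is_interval I \<and> geodesic_on A ftk I R \<Theta> R' \<Theta>'
             \<and> t \<in> I \<and> acut A (R t) \<noteq> 1 \<and> \<Theta>' t \<noteq> 0 \<longrightarrow> deriv R' t > 0)
   \<and> (\<forall>r0 \<theta>0 vr v\<theta>. A \<le> r0 \<and> (vr, v\<theta>) \<noteq> (0, 0) \<longrightarrow>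
         (\<exists>\<sigma>\<in>{1, -1}. \<exists>R \<Theta> R' \<Theta>'.
                      geodesic_on A ftk {0..} R \<Theta> R' \<Theta>'
                      \<and> R 0 = r0 \<and> \<Theta> 0 = \<theta>0 \<and> R' 0 = \<sigma> * vr \<and> \<Theta>' 0 = \<sigma> * v\<theta>
                      \<and> filterlim R at_top at_top))"
proof -
  interpret geo A c1 "\<lambda>(r,\<theta>). fk r \<theta>" Fr Ft Frr Frt by (rule G)
  have e: "ftk = ftc" unfolding ftk_def by (intro ext) (simp add: ftc_def hh_def)
  show ?thesis unfolding e
    using gauss_neg radial_accel geo_exist by blast
qed




theorem mainTheorem4:
  fixes A :: real
    and f :: "'c::finite \<Rightarrow> real \<Rightarrow> real \<Rightarrow> real"
  assumes A_pos: "A > 0"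
    and f_smooth: "\<And>k. smooth_on2 (endH A) (\<lambda>(r, \<theta>). f k r \<theta>)"
    and f_pos: "\<And>k r \<theta>. A \<le> r \<Longrightarrow> f k r \<theta> > 0"
    and f_periodic: "\<And>k r \<theta>. f k r (\<theta> + 2 * pi) = f k r \<theta>"
    and C3: "\<exists>C>0. \<forall>k r \<theta>. A \<le> r \<longrightarrow>
               - rderiv A (\<lambda>s t. 1 / (f k s t)\<^sup>2) r \<theta> \<ge> C / r * (1 / (f k r \<theta>)\<^sup>2)"
    and neg_curv: "\<And>k r \<theta>. A \<le> r \<Longrightarrow> r \<le> A + 1 \<Longrightarrow> gauss_curv A (f k) r \<theta> < 0"
  shows "\<exists>(a :: real \<Rightarrow> real) (c1 :: real).
     C2_real {A..} a
     \<and> (\<forall>r\<ge>A. 0 \<le> a r \<and> a r \<le> 1)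
     \<and> (\<forall>r\<ge>A. rderiv1 A a r \<le> 0)
     \<and> (\<forall>r\<in>{A..A + 1/2}. a r = 1)
     \<and> (\<forall>r>A + 1. a r = 0)
     \<and> c1 > 0
     \<and> (let ft = (\<lambda>k r \<theta>. (1 - a r) * sinh (c1 * r) + a r * f k r \<theta>) in
         (\<forall>k r \<theta>. A \<le> r \<longrightarrow> gauss_curv A (ft k) r \<theta> < 0)
       \<and> (\<forall>k I R \<Theta> R' \<Theta>' t. open I \<and> is_interval I \<and> geodesic_on A (ft k) I R \<Theta> R' \<Theta>'
             \<and> t \<in> I \<and> a (R t) \<noteq> 1 \<and> \<Theta>' t \<noteq> 0 \<longrightarrow> deriv R' t > 0)
       \<and> (\<forall>(chi :: 'c \<Rightarrow> real \<Rightarrow> real \<Rightarrow> real).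
             (\<forall>k. Ck 2 UNIV (\<lambda>(r, \<theta>). chi k r \<theta>))
             \<and> (\<forall>k r \<theta>. chi k r (\<theta> + 2 * pi) = chi k r \<theta>)
             \<and> (\<forall>k r \<theta>. r \<le> A \<longrightarrow> chi k r \<theta> = 1)
             \<and> (\<forall>k r \<theta>. A + 1/4 \<le> r \<longrightarrow> chi k r \<theta> = 0)
           \<longrightarrow> (\<forall>k r0 \<theta>0 vr v\<theta>.
                 (r0, \<theta>0) \<in> closure {(r, \<theta>). deriv (\<lambda>s. chi k s \<theta>) r \<noteq> 0
                                             \<or> deriv (\<lambda>s. chi k r s) \<theta> \<noteq> 0}
                 \<and> (vr, v\<theta>) \<noteq> (0, 0)
               \<longrightarrow> (\<exists>\<sigma>\<in>{1, -1}. \<exists>R \<Theta> R' \<Theta>'.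
                      geodesic_on A (ft k) {0..} R \<Theta> R' \<Theta>'
                      \<and> R 0 = r0 \<and> \<Theta> 0 = \<theta>0 \<and> R' 0 = \<sigma> * vr \<and> \<Theta>' 0 = \<sigma> * v\<theta>
                      \<and> filterlim R at_top at_top))))"
proof -
  define Fk where "Fk k = (\<lambda>(r,\<theta>). f k r \<theta>)" for k
  have Fk_app: "Fk k (r,\<theta>) = f k r \<theta>" for k r \<theta> by (simp add: Fk_def)
  define PP where "PP k Fr Ft Frr Frt \<longleftrightarrow>
    continuous_on (endH A) (Fk k) \<and> continuous_on (endH A) Fr \<and> continuous_on (endH A) Ft
    \<and> continuous_on (endH A) Frr \<and> continuous_on (endH A) Frt
    \<and> (\<forall>x\<in>endH A. (Fk k has_derivative (\<lambda>v. Fr x * fst v + Ft x * snd v)) (at x within endH A))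
    \<and> (\<forall>r \<theta>. A \<le> r \<longrightarrow> ((\<lambda>s. Fk k (s,\<theta>)) has_real_derivative Fr (r,\<theta>)) (at r within {A..}))
    \<and> (\<forall>r \<theta>. A \<le> r \<longrightarrow> ((\<lambda>t. Fk k (r,t)) has_real_derivative Ft (r,\<theta>)) (at \<theta>))
    \<and> (\<forall>r \<theta>. A \<le> r \<longrightarrow> ((\<lambda>s. Fr (s,\<theta>)) has_real_derivative Frr (r,\<theta>)) (at r within {A..}))
    \<and> (\<forall>r \<theta>. A \<le> r \<longrightarrow> ((\<lambda>t. Fr (r,t)) has_real_derivative Frt (r,\<theta>)) (at \<theta>))"
    for k Fr Ft Frr Frt
  have ex: "\<exists>p. PP k (fst p) (fst (snd p)) (fst (snd (snd p))) (snd (snd (snd p)))" for k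
  proof -
    have "Ck 2 (endH A) (Fk k)" using f_smooth[of k] by (simp add: smooth_on2_def Fk_def)
    then obtain Fr Ft Frr Frt where "PP k Fr Ft Frr Frt"
      unfolding PP_def by (rule smooth_partials) blast
    then show ?thesis by (intro exI[of _ "(Fr, Ft, Frr, Frt)"]) simp
  qed
  then obtain P where P: "\<And>k. PP k (fst (P k)) (fst (snd (P k))) (fst (snd (snd (P k)))) (snd (snd (snd (P k))))"
    by metis
  define FR where "FR k = fst (P k)" for k
  define FT where "FT k = fst (snd (P k))" for k
  define FRR where "FRR k = fst (snd (snd (P k)))" for k
  define FRT where "FRT k = snd (snd (snd (P k)))" for k
  have PPk: "PP k (FR k) (FT k) (FRR k) (FRT k)" for k using P[of k] by (simp add: FR_def FT_def FRR_def FRT_def)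
  note PPs = PPk[unfolded PP_def]
  have contF: "continuous_on (endH A) (Fk k)" for k using PPs by blast
  have contFr: "continuous_on (endH A) (FR k)" for k using PPs by blast
  have dF_r: "A \<le> r \<Longrightarrow> ((\<lambda>s. Fk k (s,\<theta>)) has_real_derivative FR k (r,\<theta>)) (at r within {A..})" for k r \<theta>
    using PPs by blast
  have dFr_r: "A \<le> r \<Longrightarrow> ((\<lambda>s. FR k (s,\<theta>)) has_real_derivative FRR k (r,\<theta>)) (at r within {A..})" for k r \<theta>
    using PPs by blast
  have Fper: "Fk k (r, \<theta> + 2*pi) = Fk k (r,\<theta>)" for k r \<theta> by (simp add: Fk_app f_periodic)
  have Frper: "A \<le> r \<Longrightarrow> FR k (r, \<theta> + 2*pi) = FR k (r,\<theta>)" for k r \<theta>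
    by (rule deriv_unique_Ici[OF dF_r dF_r]) (auto simp: Fper)
  have "\<exists>B. \<forall>r \<theta>. A \<le> r \<longrightarrow> r \<le> A + 1 \<longrightarrow> \<bar>Fk k (r,\<theta>)\<bar> \<le> B \<and> \<bar>FR k (r,\<theta>)\<bar> \<le> B" for k
  proof -
    obtain B1 where B1: "\<forall>r \<theta>. A \<le> r \<longrightarrow> r \<le> A + 1 \<longrightarrow> \<bar>Fk k (r,\<theta>)\<bar> \<le> B1"
      using bounded_periodic[OF contF Fper] by blast
    obtain B2 where B2: "\<forall>r \<theta>. A \<le> r \<longrightarrow> r \<le> A + 1 \<longrightarrow> \<bar>FR k (r,\<theta>)\<bar> \<le> B2"
      using bounded_periodic[OF contFr Frper] by blast
    show ?thesis
    proof (intro exI allI impI conjI)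
      fix r \<theta> assume "A \<le> r" "r \<le> A + 1"
      then have "\<bar>Fk k (r,\<theta>)\<bar> \<le> B1" "\<bar>FR k (r,\<theta>)\<bar> \<le> B2" using B1 B2 by auto
      then show "\<bar>Fk k (r,\<theta>)\<bar> \<le> max B1 B2" "\<bar>FR k (r,\<theta>)\<bar> \<le> max B1 B2" by (simp_all add: le_max_iff_disj)
    qed
  qed
  then obtain B where B: "\<And>k r \<theta>. A \<le> r \<Longrightarrow> r \<le> A + 1 \<Longrightarrow> \<bar>Fk k (r,\<theta>)\<bar> \<le> B k \<and> \<bar>FR k (r,\<theta>)\<bar> \<le> B k"
    by metis
  define Bm where "Bm = (\<Sum>k\<in>UNIV. \<bar>B k\<bar>)"
  have Bk: "B k \<le> Bm" for k
  proof -
    have "\<bar>B k\<bar> \<le> Bm" unfolding Bm_def by (rule member_le_sum) auto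
    then show ?thesis by simp
  qed
  have Bm0: "0 \<le> Bm" unfolding Bm_def by (simp add: sum_nonneg)
  define c1 where "c1 = 11 + Bm + Bm / (A + 1/2)"
  have c1_ge: "11 \<le> c1" using Bm0 A_pos unfolding c1_def by simp
  have sinh_ge: "x \<le> sinh x" if "0 \<le> x" for x :: real
    using real_le_x_sinh[OF that] by (simp add: sinh_field_def exp_minus)
  have Fbnd: "f k r \<theta> \<le> sinh (c1*r) \<and> FR k (r,\<theta>) \<le> c1 * cosh (c1*r)" if r: "A + 1/2 \<le> r" "r \<le> A + 1" for k r \<theta>
  proof
    have b: "\<bar>Fk k (r,\<theta>)\<bar> \<le> Bm" "\<bar>FR k (r,\<theta>)\<bar> \<le> Bm" using B[of r k \<theta>] Bk[of k] r A_pos by auto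
    have "Bm = (Bm / (A + 1/2)) * (A + 1/2)" using A_pos by simp
    also have "\<dots> \<le> c1 * (A + 1/2)" using A_pos Bm0 unfolding c1_def by (intro mult_right_mono) auto
    also have "\<dots> \<le> c1 * r" using r c1_ge by (intro mult_left_mono) auto
    also have "\<dots> \<le> sinh (c1 * r)" using r c1_ge A_pos by (intro sinh_ge) simp
    finally show "f k r \<theta> \<le> sinh (c1*r)" using b by (simp add: Fk_app)
    have "Bm \<le> c1 * 1" using A_pos Bm0 unfolding c1_def by simp
    also have "\<dots> \<le> c1 * cosh (c1*r)" using c1_ge by (intro mult_left_mono) (auto simp: cosh_real_ge_1)
    finally show "FR k (r,\<theta>) \<le> c1 * cosh (c1*r)" using b by simp
  qed
  obtain C where C: "C > 0" "\<forall>k r \<theta>. A \<le> r \<longrightarrow>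
               - rderiv A (\<lambda>s t. 1 / (f k s t)\<^sup>2) r \<theta> \<ge> C / r * (1 / (f k r \<theta>)\<^sup>2)" using C3 by blast
  have Frpos: "0 < FR k (r,\<theta>)" if r: "A \<le> r" for k r \<theta>
  proof -
    have fp: "0 < f k r \<theta>" using f_pos[OF r] .
    have d0: "((\<lambda>s. f k s \<theta>) has_real_derivative FR k (r,\<theta>)) (at r within {A..})"
      using dF_r[OF r, of k \<theta>] by (simp add: Fk_app)
    have d: "((\<lambda>s. 1 / (f k s \<theta>)\<^sup>2) has_real_derivative - (2 * f k r \<theta> * FR k (r,\<theta>)) / ((f k r \<theta>)\<^sup>2)\<^sup>2) (at r within {A..})"
      by (rule derivative_eq_intros d0 refl | simp add: fp less_imp_neq[OF fp, symmetric])+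
    have eq: "rderiv A (\<lambda>s t. 1 / (f k s t)\<^sup>2) r \<theta> = - (2 * f k r \<theta> * FR k (r,\<theta>)) / ((f k r \<theta>)\<^sup>2)\<^sup>2"
      unfolding rderiv_def by (rule rderiv1_eq[OF d _ r]) simp
    have "C / r * (1 / (f k r \<theta>)\<^sup>2) \<le> - rderiv A (\<lambda>s t. 1 / (f k s t)\<^sup>2) r \<theta>"
      using C(2) r by blast
    then have "C / r * (1 / (f k r \<theta>)\<^sup>2) \<le> (2 * f k r \<theta> * FR k (r,\<theta>)) / ((f k r \<theta>)\<^sup>2)\<^sup>2"
      unfolding eq by simp
    moreover have "0 < C / r * (1 / (f k r \<theta>)\<^sup>2)" using C(1) r A_pos fp by simp
    ultimately have "0 < (2 * f k r \<theta> * FR k (r,\<theta>)) / ((f k r \<theta>)\<^sup>2)\<^sup>2" by linarith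
    then have "0 < 2 * f k r \<theta> * FR k (r,\<theta>)" using fp by (simp add: zero_less_divide_iff)
    then show ?thesis using fp by (simp add: zero_less_mult_iff)
  qed
  have Frrpos: "0 < FRR k (r,\<theta>)" if r: "A \<le> r" "r \<le> A + 1" for k r \<theta>
  proof -
    have fp: "0 < f k r \<theta>" using f_pos r by simp
    have r1: "rderiv A (f k) s \<theta> = FR k (s,\<theta>)" if "A \<le> s" for s
      unfolding rderiv_def by (rule rderiv1_eq[OF dF_r[OF that, of k \<theta>] _ that]) (simp add: Fk_app)
    have e2: "rderiv A (rderiv A (f k)) r \<theta> = FRR k (r,\<theta>)"
      unfolding rderiv_def[of A "rderiv A (f k)"] by (rule rderiv1_eq[OF dFr_r[OF r(1)] _ r(1)]) (rule r1)
    have "gauss_curv A (f k) r \<theta> < 0" using neg_curv[OF r] .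
    then have "- FRR k (r,\<theta>) / f k r \<theta> < 0" unfolding gauss_curv_def e2 .
    then have "0 < FRR k (r,\<theta>) / f k r \<theta>" by simp
    then show ?thesis using fp by (simp add: zero_less_divide_iff)
  qed
  have G: "geo A c1 (\<lambda>(r,\<theta>). f k r \<theta>) (FR k) (FT k) (FRR k) (FRT k)" for k
    unfolding Fk_def[symmetric]
  proof (unfold_locales)
    show "0 < A" by (rule A_pos)
    show "11 \<le> c1" by (rule c1_ge)
  next
    fix r \<theta> assume "A \<le> r" then show "0 < Fk k (r,\<theta>)" using f_pos by (simp add: Fk_app)
  next
    fix r \<theta> show "Fk k (r, \<theta> + 2*pi) = Fk k (r,\<theta>)" by (rule Fper)
  next
    fix r \<theta> assume "A \<le> r" then show "0 < FR k (r,\<theta>)" by (rule Frpos)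
  next
    fix r \<theta> assume "A \<le> r" "r \<le> A + 1" then show "0 < FRR k (r,\<theta>)" by (rule Frrpos)
  next
    fix r \<theta> assume "A + 1/2 \<le> r" "r \<le> A + 1"
    then show "Fk k (r,\<theta>) \<le> sinh (c1*r) \<and> FR k (r,\<theta>) \<le> c1 * cosh (c1*r)" using Fbnd by (simp add: Fk_app)
  qed (use PPs in blast)+
  note core = geo_core[OF G]
  have C2: "C2_real {A..} (acut A)"
    unfolding C2_real_def
    by (intro exI[of _ "acut1 A"] exI[of _ "acut2 A"] conjI ballI acut2_cont
        has_field_derivative_at_within[OF acut_derivs(1)] has_field_derivative_at_within[OF acut_derivs(2)])
  have closure_sub: "closure {(r, \<theta>). deriv (\<lambda>s. chi k s \<theta>) r \<noteq> 0 \<or> deriv (\<lambda>s. chi k r s) \<theta> \<noteq> 0} \<subseteq> {p. A \<le> fst p}"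
    if chi1: "\<forall>k r \<theta>. r \<le> A \<longrightarrow> chi k r \<theta> = 1" for chi :: "'c \<Rightarrow> real \<Rightarrow> real \<Rightarrow> real" and k
  proof (rule closure_minimal)
    show "closed {p :: real \<times> real. A \<le> fst p}"
      by (intro closed_Collect_le continuous_intros)
    show "{(r, \<theta>). deriv (\<lambda>s. chi k s \<theta>) r \<noteq> 0 \<or> deriv (\<lambda>s. chi k r s) \<theta> \<noteq> 0} \<subseteq> {p. A \<le> fst p}"
    proof (rule subsetI)
      fix p assume hp: "p \<in> {(r, \<theta>). deriv (\<lambda>s. chi k s \<theta>) r \<noteq> 0 \<or> deriv (\<lambda>s. chi k r s) \<theta> \<noteq> 0}"
      obtain r \<theta> where p: "p = (r, \<theta>)" by (cases p) auto
      have h: "deriv (\<lambda>s. chi k s \<theta>) r \<noteq> 0 \<or> deriv (\<lambda>s. chi k r s) \<theta> \<noteq> 0" using hp p by simp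
      show "p \<in> {p. A \<le> fst p}"
      proof (rule ccontr)
      assume "p \<notin> {p. A \<le> fst p}"
      then have nr: "\<not> A \<le> r" using p by simp
      have "((\<lambda>s. chi k s \<theta>) has_real_derivative 0) (at r)"
        by (rule has_field_derivative_transform_within_open[where f="\<lambda>_. 1" and S="{..<A}"])
           (use nr chi1 in auto)
      then have "deriv (\<lambda>s. chi k s \<theta>) r = 0" by (rule DERIV_imp_deriv)
      moreover have "(\<lambda>s. chi k r s) = (\<lambda>s. 1)" using chi1 nr by auto
      ultimately show False using h by simp
      qed
    qed
  qed
  show ?thesis
  proof (intro exI[of _ "acut A"] exI[of _ c1] conjI)
    show "C2_real {A..} (acut A)" by (rule C2)
    show "\<forall>r\<ge>A. 0 \<le> acut A r \<and> acut A r \<le> 1" using acut_props by blast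
    show "\<forall>r\<ge>A. rderiv1 A (acut A) r \<le> 0"
    proof (intro allI impI)
      fix r assume r: "A \<le> r"
      have "rderiv1 A (acut A) r = acut1 A r"
        by (rule rderiv1_eq[OF has_field_derivative_at_within[OF acut_derivs(1)] _ r]) (rule refl)
      then show "rderiv1 A (acut A) r \<le> 0" using acut_props(3) by simp
    qed
    show "\<forall>r\<in>{A..A + 1/2}. acut A r = 1" using acut_props(4) by auto
    show "\<forall>r>A + 1. acut A r = 0" using acut_props(5) by auto
    show "c1 > 0" using c1_ge by simp
    show "let ft = (\<lambda>k r \<theta>. (1 - acut A r) * sinh (c1 * r) + acut A r * f k r \<theta>) in
         (\<forall>k r \<theta>. A \<le> r \<longrightarrow> gauss_curv A (ft k) r \<theta> < 0)
       \<and> (\<forall>k I R \<Theta> R' \<Theta>' t. open I \<and> is_interval I \<and> geodesic_on A (ft k) I R \<Theta> R' \<Theta>'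
             \<and> t \<in> I \<and> acut A (R t) \<noteq> 1 \<and> \<Theta>' t \<noteq> 0 \<longrightarrow> deriv R' t > 0)
       \<and> (\<forall>(chi :: 'c \<Rightarrow> real \<Rightarrow> real \<Rightarrow> real).
             (\<forall>k. Ck 2 UNIV (\<lambda>(r, \<theta>). chi k r \<theta>))
             \<and> (\<forall>k r \<theta>. chi k r (\<theta> + 2 * pi) = chi k r \<theta>)
             \<and> (\<forall>k r \<theta>. r \<le> A \<longrightarrow> chi k r \<theta> = 1)
             \<and> (\<forall>k r \<theta>. A + 1/4 \<le> r \<longrightarrow> chi k r \<theta> = 0)
           \<longrightarrow> (\<forall>k r0 \<theta>0 vr v\<theta>.
                 (r0, \<theta>0) \<in> closure {(r, \<theta>). deriv (\<lambda>s. chi k s \<theta>) r \<noteq> 0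
                                             \<or> deriv (\<lambda>s. chi k r s) \<theta> \<noteq> 0}
                 \<and> (vr, v\<theta>) \<noteq> (0, 0)
               \<longrightarrow> (\<exists>\<sigma>\<in>{1, -1}. \<exists>R \<Theta> R' \<Theta>'.
                      geodesic_on A (ft k) {0..} R \<Theta> R' \<Theta>'
                      \<and> R 0 = r0 \<and> \<Theta> 0 = \<theta>0 \<and> R' 0 = \<sigma> * vr \<and> \<Theta>' 0 = \<sigma> * v\<theta>
                      \<and> filterlim R at_top at_top)))"
      unfolding Let_def
    proof (intro conjI allI impI)
      fix k r \<theta> assume "A \<le> r"
      then show "gauss_curv A (\<lambda>r \<theta>. (1 - acut A r) * sinh (c1 * r) + acut A r * f k r \<theta>) r \<theta> < 0"
        using core[of k] by blast
    next
      fix k I R \<Theta> R' \<Theta>' t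
      assume "open I \<and> is_interval I \<and> geodesic_on A (\<lambda>r \<theta>. (1 - acut A r) * sinh (c1 * r) + acut A r * f k r \<theta>) I R \<Theta> R' \<Theta>'
             \<and> t \<in> I \<and> acut A (R t) \<noteq> 1 \<and> \<Theta>' t \<noteq> 0"
      then show "deriv R' t > 0" using core[of k] by blast
    next
      fix chi :: "'c \<Rightarrow> real \<Rightarrow> real \<Rightarrow> real" and k and r0 \<theta>0 vr v\<theta> :: real
      assume hchi: "(\<forall>k. Ck 2 UNIV (\<lambda>(r, \<theta>). chi k r \<theta>))
             \<and> (\<forall>k r \<theta>. chi k r (\<theta> + 2 * pi) = chi k r \<theta>)
             \<and> (\<forall>k r \<theta>. r \<le> A \<longrightarrow> chi k r \<theta> = 1)
             \<and> (\<forall>k r \<theta>. A + 1/4 \<le> r \<longrightarrow> chi k r \<theta> = 0)"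
        and hp: "(r0, \<theta>0) \<in> closure {(r, \<theta>). deriv (\<lambda>s. chi k s \<theta>) r \<noteq> 0
                                             \<or> deriv (\<lambda>s. chi k r s) \<theta> \<noteq> 0}
                 \<and> (vr, v\<theta>) \<noteq> (0, 0)"
      have "A \<le> r0" using closure_sub[of chi k] hchi hp by auto
      then show "\<exists>\<sigma>\<in>{1, -1}. \<exists>R \<Theta> R' \<Theta>'.
                      geodesic_on A (\<lambda>r \<theta>. (1 - acut A r) * sinh (c1 * r) + acut A r * f k r \<theta>) {0..} R \<Theta> R' \<Theta>'
                      \<and> R 0 = r0 \<and> \<Theta> 0 = \<theta>0 \<and> R' 0 = \<sigma> * vr \<and> \<Theta>' 0 = \<sigma> * v\<theta>
                      \<and> filterlim R at_top at_top"
        using core[of k] hp by blast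
    qed
  qed
qed


end
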